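(* Let $U,U'\in\mathcal G$ be distant, let $\lambda:U\to U'$ be a $K$-linear isomorphism, and let $R=\operatorname{End}_K(U)$. For $(x,y)\in Z^2\setminus\{(0,0)\}$ put $T^{(x,y)}:=\{xu+yu^\lambda\mid u\in U\}$. Then the set $\{T^{(x,y)}\mid (x,y)\in Z^2\setminus\{(0,0)\}\}$ is, on the one hand, the image under $\Phi$ of a $Z$-chain of $\mathbb P(R)$ and, on the other hand, a $Z$-regulus.
   Context: $K$ is a (not necessarily commutative) field with centre $Z$, and $V$ is a left vector space over $K$ of arbitrary (possibly infinite) dimension with $\dim V>2$. $\mathcal G:=\{X\le V\mid X\cong V/X\}$, assumed nonempty. Points are $1$-dimensional and lines $2$-dimensional subspaces; two subspaces meet if they have a common point. $X,Y\in\mathcal G$ are distant if $V=X\oplus Y$. A $Z$-regulus is a subset $\mathcal R\subseteq\mathcal G$ such that (R1) its elements are mutually distant and $|\mathcal R|\ge3$; (R2) if a line meets three mutually distinct elements of $\mathcal R$ then it meets all elements of $\mathcal R$; (R3) $\mathcal R$ is not properly contained in any subset of $\mathcal G$ satisfying (R1) and (R2). Maps are written as exponents on the right, $u^{\beta\lambda}=(u^\beta)^\lambda$. For a ring $S$ with $1$, $\mathrm{GL}(2,S)$ acts on the free left module $S^2$ (row vectors, multiplied by matrices on the right) and on its submodules; the projective line $\mathbb P(S)$ is the orbit of $S(1,0)$ under $\mathrm{GL}(2,S)$. With $R=\operatorname{End}_K(U)$, the field $Z$ is embedded in $R$ via $a\mapsto a\cdot\mathrm{id}_U$; this yields an embedding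 $\mathbb P(Z)\to\mathbb P(R)$, $Z(x,y)\mapsto R(x\cdot\mathrm{id},y\cdot\mathrm{id})$, and the $Z$-chains of $\mathbb P(R)$ are the images of (the embedded) $\mathbb P(Z)$ under $\mathrm{GL}(2,R)$. The map $\Phi:\mathbb P(R)\to\mathcal G$, $R(\alpha,\beta)\mapsto\{u^\alpha+u^{\beta\lambda}\mid u\in U\}$, is a well-defined bijection. *)

theory Defs
  imports Main
begin

(* K is a division ring (type class division_ring), V is a type 'v with an additive
   group structure and a left scalar multiplication sc :: 'k => 'v => 'v.  The whole
   space V is UNIV :: 'v set. *)

definition centre :: "'k::ring_1 set" where
  "centre = {z. \<forall>a. z * a = a * z}"

definition left_vs :: "('k::division_ring \<Rightarrow> 'v::ab_group_add \<Rightarrow> 'v) \<Rightarrow> bool" where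
  "left_vs sc \<longleftrightarrow>
     (\<forall>a x y. sc a (x + y) = sc a x + sc a y) \<and>
     (\<forall>a b x. sc (a + b) x = sc a x + sc b x) \<and>
     (\<forall>a b x. sc a (sc b x) = sc (a * b) x) \<and>
     (\<forall>x. sc 1 x = x)"

definition lsubspace :: "('k \<Rightarrow> 'v::ab_group_add \<Rightarrow> 'v) \<Rightarrow> 'v set \<Rightarrow> bool" where
  "lsubspace sc X \<longleftrightarrow> 0 \<in> X \<and> (\<forall>x\<in>X. \<forall>y\<in>X. x + y \<in> X) \<and> (\<forall>a. \<forall>x\<in>X. sc a x \<in> X)"

definition lspan :: "('k \<Rightarrow> 'v::ab_group_add \<Rightarrow> 'v) \<Rightarrow> 'v set \<Rightarrow> 'v set" where
  "lspan sc A = \<Inter>{W. lsubspace sc W \<and> A \<subseteq> W}"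

definition lindep_free :: "('k \<Rightarrow> 'v::ab_group_add \<Rightarrow> 'v) \<Rightarrow> 'v set \<Rightarrow> bool" where
  "lindep_free sc S \<longleftrightarrow> (\<forall>v\<in>S. v \<notin> lspan sc (S - {v}))"

definition dim_gt2 :: "('k \<Rightarrow> 'v::ab_group_add \<Rightarrow> 'v) \<Rightarrow> bool" where
  "dim_gt2 sc \<longleftrightarrow> (\<exists>S. finite S \<and> card S = 3 \<and> lindep_free sc S)"

definition linear_on :: "('k \<Rightarrow> 'v::ab_group_add \<Rightarrow> 'v) \<Rightarrow> 'v set \<Rightarrow> ('v \<Rightarrow> 'v) \<Rightarrow> bool" where
  "linear_on sc X f \<longleftrightarrow> (\<forall>x\<in>X. \<forall>y\<in>X. f (x + y) = f x + f y) \<and> (\<forall>a. \<forall>x\<in>X. f (sc a x) = sc a (f x))"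

text \<open>X is isomorphic to V/X: there is a linear map of V onto X with kernel X
  (first isomorphism theorem).\<close>
definition iso_quot :: "('k \<Rightarrow> 'v::ab_group_add \<Rightarrow> 'v) \<Rightarrow> 'v set \<Rightarrow> bool" where
  "iso_quot sc X \<longleftrightarrow> lsubspace sc X \<and>
     (\<exists>f. linear_on sc UNIV f \<and> range f = X \<and> {v. f v = 0} = X)"

definition Gset :: "('k \<Rightarrow> 'v::ab_group_add \<Rightarrow> 'v) \<Rightarrow> 'v set set" where
  "Gset sc = {X. iso_quot sc X}"

definition points :: "('k \<Rightarrow> 'v::ab_group_add \<Rightarrow> 'v) \<Rightarrow> 'v set set" where
  "points sc = {lspan sc {v} | v. v \<noteq> 0}"

definition lines :: "('k \<Rightarrow> 'v::ab_group_add \<Rightarrow> 'v) \<Rightarrow> 'v set set" where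
  "lines sc = {lspan sc {v, w} | v w. v \<noteq> w \<and> lindep_free sc {v, w}}"

definition meets :: "('k \<Rightarrow> 'v::ab_group_add \<Rightarrow> 'v) \<Rightarrow> 'v set \<Rightarrow> 'v set \<Rightarrow> bool" where
  "meets sc X Y \<longleftrightarrow> (\<exists>P\<in>points sc. P \<subseteq> X \<and> P \<subseteq> Y)"

definition distant :: "('k \<Rightarrow> 'v::ab_group_add \<Rightarrow> 'v) \<Rightarrow> 'v set \<Rightarrow> 'v set \<Rightarrow> bool" where
  "distant sc X Y \<longleftrightarrow> (\<forall>v. \<exists>x\<in>X. \<exists>y\<in>Y. v = x + y) \<and> X \<inter> Y = {0}"

definition R1 :: "('k \<Rightarrow> 'v::ab_group_add \<Rightarrow> 'v) \<Rightarrow> 'v set set \<Rightarrow> bool" where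
  "R1 sc \<R> \<longleftrightarrow> (\<forall>X\<in>\<R>. \<forall>Y\<in>\<R>. X \<noteq> Y \<longrightarrow> distant sc X Y) \<and>
     (\<exists>A\<in>\<R>. \<exists>B\<in>\<R>. \<exists>C\<in>\<R>. A \<noteq> B \<and> A \<noteq> C \<and> B \<noteq> C)"

definition R2 :: "('k \<Rightarrow> 'v::ab_group_add \<Rightarrow> 'v) \<Rightarrow> 'v set set \<Rightarrow> bool" where
  "R2 sc \<R> \<longleftrightarrow> (\<forall>L\<in>lines sc.
     (\<exists>A\<in>\<R>. \<exists>B\<in>\<R>. \<exists>C\<in>\<R>. A \<noteq> B \<and> A \<noteq> C \<and> B \<noteq> C \<and>
         meets sc L A \<and> meets sc L B \<and> meets sc L C)
     \<longrightarrow> (\<forall>X\<in>\<R>. meets sc L X))"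

definition Z_regulus :: "('k \<Rightarrow> 'v::ab_group_add \<Rightarrow> 'v) \<Rightarrow> 'v set set \<Rightarrow> bool" where
  "Z_regulus sc \<R> \<longleftrightarrow> \<R> \<subseteq> Gset sc \<and> R1 sc \<R> \<and> R2 sc \<R> \<and>
     \<not> (\<exists>\<S>. \<R> \<subset> \<S> \<and> \<S> \<subseteq> Gset sc \<and> R1 sc \<S> \<and> R2 sc \<S>)"

text \<open>Endomorphisms of U are represented as functions on V that vanish outside U.
  Maps are written on the right: the product f g in R means "first f, then g".\<close>

definition End :: "('k \<Rightarrow> 'v::ab_group_add \<Rightarrow> 'v) \<Rightarrow> 'v set \<Rightarrow> ('v \<Rightarrow> 'v) set" where
  "End sc U = {f. linear_on sc U f \<and> f ` U \<subseteq> U \<and> (\<forall>v. v \<notin> U \<longrightarrow> f v = 0)}"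

definition rmul :: "('v \<Rightarrow> 'v) \<Rightarrow> ('v \<Rightarrow> 'v) \<Rightarrow> ('v \<Rightarrow> 'v)" where
  "rmul f g = g \<circ> f"

definition radd :: "('v \<Rightarrow> 'v) \<Rightarrow> ('v \<Rightarrow> 'v) \<Rightarrow> ('v::ab_group_add \<Rightarrow> 'v)" where
  "radd f g = (\<lambda>v. f v + g v)"

definition rzero :: "'v \<Rightarrow> 'v::ab_group_add" where
  "rzero = (\<lambda>v. 0)"

definition rid :: "'v set \<Rightarrow> 'v \<Rightarrow> 'v::ab_group_add" where
  "rid U = (\<lambda>v. if v \<in> U then v else 0)"

text \<open>The embedding of Z in R: a \<mapsto> a * id_U.\<close>
definition rscal :: "('k \<Rightarrow> 'v::ab_group_add \<Rightarrow> 'v) \<Rightarrow> 'v set \<Rightarrow> 'k \<Rightarrow> 'v \<Rightarrow> 'v" where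
  "rscal sc U a = (\<lambda>v. if v \<in> U then sc a v else 0)"

text \<open>2x2 matrices as pairs of rows ((a,b),(c,d)); row vectors are multiplied on the right.\<close>
definition rowmulR :: "('v \<Rightarrow> 'v) \<times> ('v \<Rightarrow> 'v) \<Rightarrow> (('v \<Rightarrow> 'v) \<times> ('v \<Rightarrow> 'v)) \<times> (('v \<Rightarrow> 'v) \<times> ('v \<Rightarrow> 'v))
     \<Rightarrow> ('v::ab_group_add \<Rightarrow> 'v) \<times> ('v \<Rightarrow> 'v)" where
  "rowmulR p M = (radd (rmul (fst p) (fst (fst M))) (rmul (snd p) (fst (snd M))),
                  radd (rmul (fst p) (snd (fst M))) (rmul (snd p) (snd (snd M))))"

definition matmulR where
  "matmulR M N = (rowmulR (fst M) N, rowmulR (snd M) N)"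

definition mat_entries :: "('a \<times> 'a) \<times> ('a \<times> 'a) \<Rightarrow> 'a set" where
  "mat_entries M = {fst (fst M), snd (fst M), fst (snd M), snd (snd M)}"

definition GL2R :: "('k \<Rightarrow> 'v::ab_group_add \<Rightarrow> 'v) \<Rightarrow> 'v set
     \<Rightarrow> ((('v \<Rightarrow> 'v) \<times> ('v \<Rightarrow> 'v)) \<times> (('v \<Rightarrow> 'v) \<times> ('v \<Rightarrow> 'v))) set" where
  "GL2R sc U = {M. mat_entries M \<subseteq> End sc U \<and>
     (\<exists>N. mat_entries N \<subseteq> End sc U \<and>
          matmulR M N = ((rid U, rzero), (rzero, rid U)) \<and>
          matmulR N M = ((rid U, rzero), (rzero, rid U)))}"

definition actR where
  "actR M S = (\<lambda>p. rowmulR p M) ` S"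

definition Rsub :: "('k \<Rightarrow> 'v::ab_group_add \<Rightarrow> 'v) \<Rightarrow> 'v set \<Rightarrow> ('v \<Rightarrow> 'v) \<Rightarrow> ('v \<Rightarrow> 'v)
     \<Rightarrow> (('v \<Rightarrow> 'v) \<times> ('v \<Rightarrow> 'v)) set" where
  "Rsub sc U a b = {(rmul \<rho> a, rmul \<rho> b) | \<rho>. \<rho> \<in> End sc U}"

definition projR where
  "projR sc U = {actR M (Rsub sc U (rid U) rzero) | M. M \<in> GL2R sc U}"

definition rowmulK :: "'k \<times> 'k \<Rightarrow> ('k \<times> 'k) \<times> ('k \<times> 'k) \<Rightarrow> 'k::ring_1 \<times> 'k" where
  "rowmulK p M = (fst p * fst (fst M) + snd p * fst (snd M),
                  fst p * snd (fst M) + snd p * snd (snd M))"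

definition matmulK where
  "matmulK M N = (rowmulK (fst M) N, rowmulK (snd M) N)"

definition GL2Z :: "(('k::ring_1 \<times> 'k) \<times> ('k \<times> 'k)) set" where
  "GL2Z = {M. mat_entries M \<subseteq> centre \<and>
     (\<exists>N. mat_entries N \<subseteq> centre \<and>
          matmulK M N = ((1, 0), (0, 1)) \<and> matmulK N M = ((1, 0), (0, 1)))}"

definition actK where
  "actK M S = (\<lambda>p. rowmulK p M) ` S"

definition Zsub :: "'k::ring_1 \<Rightarrow> 'k \<Rightarrow> ('k \<times> 'k) set" where
  "Zsub x y = {(z * x, z * y) | z. z \<in> centre}"

definition projZ :: "('k::ring_1 \<times> 'k) set set" where
  "projZ = {actK M (Zsub 1 0) | M. M \<in> GL2Z}"

definition embZ :: "('k::ring_1 \<Rightarrow> 'v::ab_group_add \<Rightarrow> 'v) \<Rightarrow> 'v set \<Rightarrow> (('v \<Rightarrow> 'v) \<times> ('v \<Rightarrow> 'v)) set set" where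
  "embZ sc U = {Rsub sc U (rscal sc U x) (rscal sc U y) | x y.
                  x \<in> centre \<and> y \<in> centre \<and> Zsub x y \<in> projZ}"

definition Zchains where
  "Zchains sc U = {actR M ` embZ sc U | M. M \<in> GL2R sc U}"

definition Phi :: "('k \<Rightarrow> 'v::ab_group_add \<Rightarrow> 'v) \<Rightarrow> 'v set \<Rightarrow> ('v \<Rightarrow> 'v)
     \<Rightarrow> (('v \<Rightarrow> 'v) \<times> ('v \<Rightarrow> 'v)) set \<Rightarrow> 'v set" where
  "Phi sc U lam P = (THE X. \<exists>\<alpha> \<beta>. \<alpha> \<in> End sc U \<and> \<beta> \<in> End sc U \<and> P = Rsub sc U \<alpha> \<beta> \<and>
        X = {\<alpha> u + lam (\<beta> u) | u. u \<in> U})"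

definition Tsub :: "('k \<Rightarrow> 'v::ab_group_add \<Rightarrow> 'v) \<Rightarrow> 'v set \<Rightarrow> ('v \<Rightarrow> 'v) \<Rightarrow> 'k \<Rightarrow> 'k \<Rightarrow> 'v set" where
  "Tsub sc U lam x y = {sc x u + sc y (lam u) | u. u \<in> U}"

end

theory Submission
  imports Defs
begin


lemma cen_comm: "z \<in> centre \<Longrightarrow> z * a = a * (z::'k::division_ring)"
  by (simp add: centre_def)
lemma cen_lcomm: "z \<in> centre \<Longrightarrow> a * (z * b) = z * (a * (b::'k::division_ring))"
proof -
  assume z: "z \<in> centre"
  have "a * (z * b) = (a * z) * b" by (simp add: mult.assoc)
  also have "\<dots> = (z * a) * b" using z by (simp add: cen_comm)
  finally show ?thesis by (simp add: mult.assoc)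
qed
lemma cen_0[simp]: "(0::'k::ring_1) \<in> centre" by (simp add: centre_def)
lemma cen_1[simp]: "(1::'k::ring_1) \<in> centre" by (simp add: centre_def)
lemma cen_add: "a \<in> centre \<Longrightarrow> b \<in> centre \<Longrightarrow> a + b \<in> (centre::'k::ring_1 set)"
  by (simp add: centre_def algebra_simps)
lemma cen_minus: "a \<in> centre \<Longrightarrow> - a \<in> (centre::'k::ring_1 set)"
  by (simp add: centre_def)
lemma cen_diff: "a \<in> centre \<Longrightarrow> b \<in> centre \<Longrightarrow> a - b \<in> (centre::'k::ring_1 set)"
  by (simp add: centre_def algebra_simps)
lemma cen_mult: "a \<in> centre \<Longrightarrow> b \<in> centre \<Longrightarrow> a * b \<in> (centre::'k::ring_1 set)"
  unfolding centre_def
proof (rule CollectI, rule allI)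
  fix c assume "a \<in> {z. \<forall>a. z * a = a * z}" "b \<in> {z. \<forall>a. z * a = a * z}"
  then have "a * c = c * a" "b * c = c * b" by auto
  then have "a * b * c = a * (c * b)" by (simp add: mult.assoc)
  also have "\<dots> = (a * c) * b" by (simp add: mult.assoc)
  also have "\<dots> = c * (a * b)" using \<open>a * c = c * a\<close> by (simp add: mult.assoc)
  finally show "a * b * c = c * (a * b)" .
qed
lemma cen_inv: assumes c: "a \<in> centre" shows "inverse a \<in> (centre::'k::division_ring set)"
proof (cases "a = 0")
  case False
  show ?thesis unfolding centre_def
  proof (rule CollectI, rule allI)
    fix b
    have ba: "b * a = a * b" using c by (simp add: centre_def)
    have "inverse a * b = inverse a * (b * (a * inverse a))" by (simp only: right_inverse[OF False] mult_1_right)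
    also have "\<dots> = inverse a * (b * a) * inverse a" by (simp only: mult.assoc)
    also have "\<dots> = inverse a * (a * b) * inverse a" by (simp only: ba)
    also have "\<dots> = (inverse a * a) * b * inverse a" by (simp only: mult.assoc)
    also have "\<dots> = b * inverse a" by (simp only: left_inverse[OF False] mult_1_left)
    finally show "inverse a * b = b * inverse a" .
  qed
qed simp

lemmas cen_simps = cen_comm cen_lcomm cen_add cen_minus cen_diff cen_mult cen_inv

locale vsp =
  fixes sc :: "'k::division_ring \<Rightarrow> 'v::ab_group_add \<Rightarrow> 'v"
  assumes vs: "left_vs sc"
begin

lemma sc_add: "sc a (x + y) = sc a x + sc a y" using vs by (simp add: left_vs_def)
lemma sc_addl: "sc (a + b) x = sc a x + sc b x" using vs by (simp add: left_vs_def)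
lemma sc_sc: "sc a (sc b x) = sc (a * b) x" using vs by (simp add: left_vs_def)
lemma sc_1[simp]: "sc 1 x = x" using vs by (simp add: left_vs_def)
lemma sc_0r[simp]: "sc a 0 = 0"
proof -
  have "sc a 0 + sc a 0 = sc a 0 + 0" by (simp flip: sc_add)
  then show ?thesis by simp
qed
lemma sc_0l[simp]: "sc 0 x = 0"
proof -
  have "sc 0 x + sc 0 x = sc 0 x + 0" by (simp flip: sc_addl)
  then show ?thesis by simp
qed
lemma sc_neg: "sc a (- x) = - sc a x"
proof -
  have "sc a (- x) + sc a x = 0" by (simp flip: sc_add)
  then show ?thesis by (simp add: eq_neg_iff_add_eq_0)
qed
lemma sc_negl: "sc (- a) x = - sc a x"
proof -
  have "sc (- a) x + sc a x = 0" by (simp flip: sc_addl)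
  then show ?thesis by (simp add: eq_neg_iff_add_eq_0)
qed
lemma sc_diff: "sc a (x - y) = sc a x - sc a y"
  using sc_add[of a x "- y"] by (simp add: sc_neg)
lemma sc_diffl: "sc (a - b) x = sc a x - sc b x"
  using sc_addl[of a "- b" x] by (simp add: sc_negl)
lemma sc_m1: "sc (-1) x = - x" by (simp add: sc_negl)
lemma sc_eq0: assumes h: "sc a x = 0" shows "a = 0 \<or> x = 0"
proof (cases "a = 0")
  case False
  then have "x = sc (inverse a * a) x" by simp
  also have "\<dots> = 0" using h by (simp flip: sc_sc)
  finally show ?thesis by blast
qed simp
lemma sc_inv: "a \<noteq> 0 \<Longrightarrow> sc (inverse a) (sc a x) = x" by (simp add: sc_sc)
lemma sc_inv2: "a \<noteq> 0 \<Longrightarrow> sc a (sc (inverse a) x) = x" by (simp add: sc_sc)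

lemma sub0: "lsubspace sc X \<Longrightarrow> 0 \<in> X" by (simp add: lsubspace_def)
lemma subadd: "lsubspace sc X \<Longrightarrow> x \<in> X \<Longrightarrow> y \<in> X \<Longrightarrow> x + y \<in> X" by (simp add: lsubspace_def)
lemma subsc: "lsubspace sc X \<Longrightarrow> x \<in> X \<Longrightarrow> sc a x \<in> X" by (simp add: lsubspace_def)
lemma subneg: "lsubspace sc X \<Longrightarrow> x \<in> X \<Longrightarrow> - x \<in> X" using subsc[of X x "-1"] by (simp add: sc_m1)
lemma subdiff: "lsubspace sc X \<Longrightarrow> x \<in> X \<Longrightarrow> y \<in> X \<Longrightarrow> x - y \<in> X"
  using subadd[of X x "- y"] subneg[of X y] by simp

lemma lspan_sub: "lsubspace sc W \<Longrightarrow> A \<subseteq> W \<Longrightarrow> lspan sc A \<subseteq> W"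
  unfolding lspan_def by blast
lemma lspan_sup: "A \<subseteq> lspan sc A" unfolding lspan_def by blast
lemma lspan_subspace: "lsubspace sc (lspan sc A)"
  unfolding lspan_def lsubspace_def by blast

definition span2 where "span2 v w = {sc s v + sc t w | s t. True}"

lemma span2_subspace: "lsubspace sc (span2 v w)"
  unfolding lsubspace_def span2_def
proof (intro conjI ballI allI)
  show "0 \<in> {sc s v + sc t w |s t. True}" by (rule CollectI, rule exI[of _ 0], rule exI[of _ 0]) simp
  fix x y assume "x \<in> {sc s v + sc t w |s t. True}" "y \<in> {sc s v + sc t w |s t. True}"
  then obtain s t s' t' where "x = sc s v + sc t w" "y = sc s' v + sc t' w" by blast
  then have "x + y = sc (s + s') v + sc (t + t') w" by (simp add: sc_addl algebra_simps)
  then show "x + y \<in> {sc s v + sc t w |s t. True}" by blast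
next
  fix a x assume "x \<in> {sc s v + sc t w |s t. True}"
  then obtain s t where "x = sc s v + sc t w" by blast
  then have "sc a x = sc (a * s) v + sc (a*t) w" by (simp add: sc_add sc_sc)
  then show "sc a x \<in> {sc s v + sc t w |s t. True}" by blast
qed

lemma lspan2: "lspan sc {v, w} = span2 v w"
proof
  show "lspan sc {v, w} \<subseteq> span2 v w"
  proof (rule lspan_sub[OF span2_subspace])
    have "v = sc 1 v + sc 0 w" "w = sc 0 v + sc 1 w" by simp_all
    then show "{v, w} \<subseteq> span2 v w" unfolding span2_def by blast
  qed
  show "span2 v w \<subseteq> lspan sc {v, w}"
  proof
    fix x assume "x \<in> span2 v w"
    then obtain s t where x: "x = sc s v + sc t w" unfolding span2_def by blast
    have "v \<in> lspan sc {v,w}" "w \<in> lspan sc {v,w}" using lspan_sup by blast+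
    then show "x \<in> lspan sc {v,w}" unfolding x
      by (intro subadd subsc lspan_subspace)
  qed
qed

lemma lspan1: "lspan sc {v} = {sc s v | s. True}"
proof -
  have "lspan sc {v} = lspan sc {v, v}" by simp
  also have "\<dots> = span2 v v" by (rule lspan2)
  also have "\<dots> = {sc s v | s. True}" unfolding span2_def
  proof (intro set_eqI iffI)
    fix x assume "x \<in> {sc s v + sc t v |s t. True}"
    then obtain s t where "x = sc s v + sc t v" by blast
    then have "x = sc (s+t) v" by (simp add: sc_addl)
    then show "x \<in> {sc s v |s. True}" by blast
  next
    fix x assume "x \<in> {sc s v |s. True}"
    then obtain s where "x = sc s v" by blast
    then have "x = sc s v + sc 0 v" by simp
    then show "x \<in> {sc s v + sc t v |s t. True}" by blast
  qed
  finally show ?thesis .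
qed

lemma subspace_UNIV: "lsubspace sc UNIV" by (simp add: lsubspace_def)

lemma meetsI: "v \<noteq> 0 \<Longrightarrow> lsubspace sc L \<Longrightarrow> lsubspace sc X \<Longrightarrow> v \<in> L \<Longrightarrow> v \<in> X \<Longrightarrow> meets sc L X"
proof -
  assume h: "v \<noteq> 0" "lsubspace sc L" "lsubspace sc X" "v \<in> L" "v \<in> X"
  have "lspan sc {v} \<in> points sc" unfolding points_def using h(1) by blast
  moreover have "lspan sc {v} \<subseteq> L" using h by (intro lspan_sub) auto
  moreover have "lspan sc {v} \<subseteq> X" using h by (intro lspan_sub) auto
  ultimately show ?thesis unfolding meets_def by blast
qed

lemma meetsD: "meets sc L X \<Longrightarrow> \<exists>v. v \<noteq> 0 \<and> v \<in> L \<and> v \<in> X"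
proof -
  assume "meets sc L X"
  then obtain v where "v \<noteq> 0" "lspan sc {v} \<subseteq> L" "lspan sc {v} \<subseteq> X"
    unfolding meets_def points_def by blast
  moreover have "v \<in> lspan sc {v}" using lspan_sup by blast
  ultimately show ?thesis by blast
qed

end


lemma dep3a:
  fixes s1 s2 s3 t1 t2 t3 :: "'k::division_ring"
  assumes s1: "s1 \<noteq> 0"
  shows "\<exists>c1 c2 c3. (c1 \<noteq> 0 \<or> c2 \<noteq> 0 \<or> c3 \<noteq> 0) \<and> c1*s1 + c2*s2 + c3*s3 = 0 \<and> c1*t1 + c2*t2 + c3*t3 = 0"
proof -
  define i where "i = inverse s1"
  have is1: "i * s1 = 1" unfolding i_def using s1 by simp
  define e2 where "e2 = t2 - s2*i*t1"
  define e3 where "e3 = t3 - s3*i*t1"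
  have key: "\<And>c2 c3. (-(c2*s2 + c3*s3)*i)*s1 + c2*s2 + c3*s3 = 0 \<and>
                (-(c2*s2 + c3*s3)*i)*t1 + c2*t2 + c3*t3 = c2*e2 + c3*e3"
  proof -
    fix c2 c3
    have "(-(c2*s2 + c3*s3)*i)*s1 = -(c2*s2 + c3*s3)*(i*s1)" by (simp only: mult.assoc)
    then have a: "(-(c2*s2 + c3*s3)*i)*s1 = -(c2*s2 + c3*s3)" by (simp add: is1)
    have b: "(-(c2*s2 + c3*s3)*i)*t1 + c2*t2 + c3*t3 = c2*e2 + c3*e3"
      unfolding e2_def e3_def by (simp add: algebra_simps)
    show "(-(c2*s2 + c3*s3)*i)*s1 + c2*s2 + c3*s3 = 0 \<and>
                (-(c2*s2 + c3*s3)*i)*t1 + c2*t2 + c3*t3 = c2*e2 + c3*e3"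
      using a b by simp
  qed
  show ?thesis
  proof (cases "e2 = 0")
    case True
    then show ?thesis using key[of 1 0] by (intro exI[of _ "-(1*s2 + 0*s3)*i"] exI[of _ 1] exI[of _ 0]) simp
  next
    case False
    have "(-e3 * inverse e2) * e2 + 1 * e3 = 0" using False by (simp add: mult.assoc)
    then show ?thesis using key[of "-e3 * inverse e2" 1]
      by (intro exI[of _ "-((-e3 * inverse e2)*s2 + 1*s3)*i"] exI[of _ "-e3 * inverse e2"] exI[of _ 1]) simp
  qed
qed

lemma dep3k:
  fixes s1 s2 s3 t1 t2 t3 :: "'k::division_ring"
  shows "\<exists>c1 c2 c3. (c1 \<noteq> 0 \<or> c2 \<noteq> 0 \<or> c3 \<noteq> 0) \<and> c1*s1 + c2*s2 + c3*s3 = 0 \<and> c1*t1 + c2*t2 + c3*t3 = 0"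
proof -
  consider "s1 \<noteq> 0" | "s2 \<noteq> 0" | "s3 \<noteq> 0" | "s1 = 0 \<and> s2 = 0 \<and> s3 = 0" by blast
  then show ?thesis
  proof cases
    case 1 then show ?thesis by (rule dep3a)
  next
    case 2
    from dep3a[OF 2, of s1 s3 t2 t1 t3] obtain c1 c2 c3 where
      "(c1 \<noteq> 0 \<or> c2 \<noteq> 0 \<or> c3 \<noteq> 0) \<and> c1*s2 + c2*s1 + c3*s3 = 0 \<and> c1*t2 + c2*t1 + c3*t3 = 0" by blast
    then show ?thesis by (intro exI[of _ c2] exI[of _ c1] exI[of _ c3]) (auto simp: algebra_simps)
  next
    case 3
    from dep3a[OF 3, of s1 s2 t3 t1 t2] obtain c1 c2 c3 where
      "(c1 \<noteq> 0 \<or> c2 \<noteq> 0 \<or> c3 \<noteq> 0) \<and> c1*s3 + c2*s1 + c3*s2 = 0 \<and> c1*t3 + c2*t1 + c3*t2 = 0" by blast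
    then show ?thesis by (intro exI[of _ c2] exI[of _ c3] exI[of _ c1]) (auto simp: algebra_simps)
  next
    case 4
    show ?thesis
    proof (cases "t1 = 0")
      case True
      then show ?thesis using 4 by (intro exI[of _ 1] exI[of _ 0] exI[of _ 0]) simp
    next
      case False
      have "(-t2 * inverse t1) * t1 + 1 * t2 = 0" using False by (simp add: mult.assoc)
      then show ?thesis using 4 by (intro exI[of _ "-t2 * inverse t1"] exI[of _ 1] exI[of _ 0]) simp
    qed
  qed
qed

context vsp begin

lemma dep3:
  assumes "p1 \<in> span2 v w" "p2 \<in> span2 v w" "p3 \<in> span2 v w"
  shows "\<exists>c1 c2 c3. (c1 \<noteq> 0 \<or> c2 \<noteq> 0 \<or> c3 \<noteq> 0) \<and> sc c1 p1 + sc c2 p2 + sc c3 p3 = 0"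
proof -
  obtain s1 t1 s2 t2 s3 t3 where p: "p1 = sc s1 v + sc t1 w" "p2 = sc s2 v + sc t2 w" "p3 = sc s3 v + sc t3 w"
    using assms unfolding span2_def by blast
  obtain c1 c2 c3 where c: "(c1 \<noteq> 0 \<or> c2 \<noteq> 0 \<or> c3 \<noteq> 0)" "c1*s1 + c2*s2 + c3*s3 = 0" "c1*t1 + c2*t2 + c3*t3 = 0"
    using dep3k by blast
  have "sc c1 p1 + sc c2 p2 + sc c3 p3 = sc (c1*s1 + c2*s2 + c3*s3) v + sc (c1*t1 + c2*t2 + c3*t3) w"
    unfolding p by (simp add: sc_add sc_addl sc_sc algebra_simps)
  then show ?thesis using c by auto
qed

end


locale setting = vsp sc for sc :: "'k::division_ring \<Rightarrow> 'v::ab_group_add \<Rightarrow> 'v" +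
  fixes U U' :: "'v set" and lam :: "'v \<Rightarrow> 'v"
  assumes UG: "U \<in> Gset sc" and U'G: "U' \<in> Gset sc" and dist: "distant sc U U'"
    and lin: "linear_on sc U lam" and bij: "bij_betw lam U U'"
begin

lemma subU: "lsubspace sc U" using UG by (simp add: Gset_def iso_quot_def)
lemma subU': "lsubspace sc U'" using U'G by (simp add: Gset_def iso_quot_def)
lemma U0: "0 \<in> U" using subU by (rule sub0)
lemma U'0: "0 \<in> U'" using subU' by (rule sub0)

lemma decomp: "\<exists>p\<in>U. \<exists>q\<in>U'. v = p + q" using dist by (simp add: distant_def)
lemma int0: "x \<in> U \<Longrightarrow> x \<in> U' \<Longrightarrow> x = 0" using dist by (auto simp: distant_def)

lemma uniq:
  assumes "p \<in> U" "p' \<in> U" "q \<in> U'" "q' \<in> U'" "p + q = p' + q'"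
  shows "p = p' \<and> q = q'"
proof -
  have "p - p' = q' - q" using assms(5) by (simp add: algebra_simps)
  moreover have "p - p' \<in> U" using assms by (intro subdiff subU)
  moreover have "q' - q \<in> U'" using assms by (intro subdiff subU')
  ultimately have "p - p' = 0" using int0 by metis
  then show ?thesis using assms(5) by simp
qed

lemma lam_add: "u \<in> U \<Longrightarrow> w \<in> U \<Longrightarrow> lam (u + w) = lam u + lam w"
  using lin by (simp add: linear_on_def)
lemma lam_sc: "u \<in> U \<Longrightarrow> lam (sc a u) = sc a (lam u)"
  using lin by (simp add: linear_on_def)
lemma lam_in: "u \<in> U \<Longrightarrow> lam u \<in> U'"
  using bij by (auto simp: bij_betw_def)
lemma lam_0: "lam 0 = 0"
  using lam_sc[OF U0, of 0] by simp
lemma lam_inj: "u \<in> U \<Longrightarrow> w \<in> U \<Longrightarrow> lam u = lam w \<Longrightarrow> u = w"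
  using bij by (auto simp: bij_betw_def inj_on_def)
lemma lam_surj: "q \<in> U' \<Longrightarrow> \<exists>r\<in>U. q = lam r"
  using bij by (auto simp: bij_betw_def)
lemma lam_eq0: "u \<in> U \<Longrightarrow> lam u = 0 \<Longrightarrow> u = 0"
  using lam_inj[of u 0] U0 lam_0 by simp
lemma lam_diff: "u \<in> U \<Longrightarrow> w \<in> U \<Longrightarrow> lam (u - w) = lam u - lam w"
proof -
  assume h: "u \<in> U" "w \<in> U"
  have "lam (u - w) + lam w = lam (u - w + w)" using h by (intro lam_add[symmetric] subdiff subU)
  then show ?thesis by (simp add: algebra_simps)
qed

definition tv where "tv x y u = sc x u + sc y (lam u)"

lemma Tsub_eq: "Tsub sc U lam x y = tv x y ` U"
  unfolding Tsub_def tv_def by auto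

lemma tv_split: "u \<in> U \<Longrightarrow> sc x u \<in> U \<and> sc y (lam u) \<in> U'"
  by (simp add: lam_in subU subU' subsc)

lemma tv_0[simp]: "tv x y 0 = 0" by (simp add: tv_def lam_0)

lemma tv_add: "u \<in> U \<Longrightarrow> w \<in> U \<Longrightarrow> tv x y (u + w) = tv x y u + tv x y w"
  by (simp add: tv_def lam_add sc_add algebra_simps)

lemma tv_sc: "x \<in> centre \<Longrightarrow> y \<in> centre \<Longrightarrow> u \<in> U \<Longrightarrow> tv x y (sc a u) = sc a (tv x y u)"
  by (simp add: tv_def lam_sc sc_add sc_sc cen_comm)

lemma tv_scl: "x \<in> centre \<Longrightarrow> y \<in> centre \<Longrightarrow> u \<in> U \<Longrightarrow> tv (k*x) (k*y) u = tv x y (sc k u)"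
  by (simp add: tv_def lam_sc sc_sc cen_comm)

lemma Tsub_subspace:
  assumes "x \<in> centre" "y \<in> centre"
  shows "lsubspace sc (Tsub sc U lam x y)"
  unfolding Tsub_eq lsubspace_def
proof (intro conjI ballI allI)
  show "0 \<in> tv x y ` U" using U0 tv_0 by (metis image_eqI)
next
  fix a b assume "a \<in> tv x y ` U" "b \<in> tv x y ` U"
  then obtain u w where "u \<in> U" "w \<in> U" "a = tv x y u" "b = tv x y w" by blast
  then show "a + b \<in> tv x y ` U" using tv_add subU subadd by (metis image_eqI)
next
  fix k a assume "a \<in> tv x y ` U"
  then obtain u where "u \<in> U" "a = tv x y u" by blast
  then show "sc k a \<in> tv x y ` U" using tv_sc[OF assms] subU subsc by (metis image_eqI)
qed

lemma tv_nz:
  assumes "u \<in> U" "u \<noteq> 0" "(x, y) \<noteq> (0, 0)"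
  shows "tv x y u \<noteq> 0"
proof
  assume "tv x y u = 0"
  then have "sc x u + sc y (lam u) = 0 + 0" by (simp add: tv_def)
  then have "sc x u = 0 \<and> sc y (lam u) = 0" using tv_split[OF assms(1)] U0 U'0 uniq by blast
  then have "x = 0" "y = 0 \<or> lam u = 0" using sc_eq0 assms(2) by blast+
  then show False using assms lam_eq0 by auto
qed

lemma Tsub_scale:
  assumes "x \<in> centre" "y \<in> centre" "k \<noteq> 0"
  shows "Tsub sc U lam (k*x) (k*y) = Tsub sc U lam x y"
  unfolding Tsub_eq
proof (intro set_eqI iffI)
  fix v assume "v \<in> tv (k*x) (k*y) ` U"
  then obtain u where "u \<in> U" "v = tv (k*x) (k*y) u" by blast
  then show "v \<in> tv x y ` U" using tv_scl[OF assms(1,2)] subU subsc by (metis image_eqI)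
next
  fix v assume "v \<in> tv x y ` U"
  then obtain u where u: "u \<in> U" "v = tv x y u" by blast
  then have "v = tv (k*x) (k*y) (sc (inverse k) u)" using tv_scl[OF assms(1,2)] subU subsc sc_inv2[OF assms(3)]
    by simp
  then show "v \<in> tv (k*x) (k*y) ` U" using u subU subsc by blast
qed

lemma Tsub_det0:
  assumes c: "x \<in> centre" "y \<in> centre" "x' \<in> centre" "y' \<in> centre"
    and d: "x*y' - y*x' = 0" and nz: "(x, y) \<noteq> (0, 0)" "(x', y') \<noteq> (0, 0)"
  shows "Tsub sc U lam x y = Tsub sc U lam x' y'"
proof (cases "x = 0")
  case False
  define k where "k = x' * inverse x"
  have 1: "x' = k * x" unfolding k_def using False by (simp add: mult.assoc)
  have "y' = inverse x * (x * y')" using False by (simp flip: mult.assoc)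
  also have "\<dots> = inverse x * (y * x')" using d by simp
  also have "\<dots> = k * y" unfolding k_def using c by (simp add: cen_simps mult.assoc)
  finally have 2: "y' = k * y" .
  have "k \<noteq> 0" using 1 2 nz by auto
  then show ?thesis using Tsub_scale[OF c(1,2)] 1 2 by simp
next
  case True
  then have y: "y \<noteq> 0" using nz by simp
  have "y * x' = 0" using d True by simp
  then have x': "x' = 0" using y by simp
  define k where "k = y' * inverse y"
  have 2: "y' = k * y" unfolding k_def using y by (simp add: mult.assoc)
  have "k \<noteq> 0" using 2 x' nz by auto
  then show ?thesis using Tsub_scale[OF c(1,2)] 2 True x' by simp
qed

lemma Tsub_neq_det:
  assumes c: "x \<in> centre" "y \<in> centre" "x' \<in> centre" "y' \<in> centre"
    and nz: "(x, y) \<noteq> (0, 0)" "(x', y') \<noteq> (0, 0)"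
    and ne: "Tsub sc U lam x y \<noteq> Tsub sc U lam x' y'"
  shows "x*y' - y*x' \<noteq> 0"
  using Tsub_det0[OF c _ nz] ne by blast

end

context setting begin

lemma Tsub_distant:
  assumes c: "x \<in> centre" "y \<in> centre" "x' \<in> centre" "y' \<in> centre"
    and d: "x*y' - y*x' \<noteq> 0"
  shows "distant sc (Tsub sc U lam x y) (Tsub sc U lam x' y')"
  unfolding distant_def Tsub_eq
proof (intro conjI allI)
  fix v
  obtain p q where pq: "p \<in> U" "q \<in> U'" "v = p + q" using decomp by blast
  obtain r where r: "r \<in> U" "q = lam r" using lam_surj[OF pq(2)] by blast
  define e where "e = inverse (x*y' - y*x')"
  have ce: "e \<in> centre" unfolding e_def using c by (simp add: cen_simps)
  have ed: "e * (x*y' - y*x') = 1" unfolding e_def using d by simp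
  define u where "u = sc e (sc y' p - sc x' r)"
  define w where "w = sc e (sc x r - sc y p)"
  have uU: "u \<in> U" "w \<in> U" unfolding u_def w_def using pq r by (simp_all add: subU subsc subdiff)
  have A: "x * (e * y') - x' * (e * y) = 1" using c ce ed by (simp add: algebra_simps cen_comm cen_lcomm)
  have B: "x' * (e * x) - x * (e * x') = 0" using c ce by (simp add: algebra_simps cen_comm cen_lcomm)
  have C: "y * (e * y') - y' * (e * y) = 0" using c ce by (simp add: algebra_simps cen_comm cen_lcomm)
  have D: "y' * (e * x) - y * (e * x') = 1" using c ce ed by (simp add: algebra_simps cen_comm cen_lcomm)
  have 1: "sc x u + sc x' w = p"
  proof -
    have "sc x u + sc x' w = (sc (x * (e * y')) p - sc (x' * (e * y)) p) + (sc (x' * (e * x)) r - sc (x * (e * x')) r)"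
      unfolding u_def w_def by (simp add: sc_diff sc_sc algebra_simps)
    also have "\<dots> = p" by (simp only: A B flip: sc_diffl) simp
    finally show ?thesis .
  qed
  have 2: "sc y u + sc y' w = r"
  proof -
    have "sc y u + sc y' w = (sc (y * (e * y')) p - sc (y' * (e * y)) p) + (sc (y' * (e * x)) r - sc (y * (e * x')) r)"
      unfolding u_def w_def by (simp add: sc_diff sc_sc algebra_simps)
    also have "\<dots> = r" by (simp only: C D flip: sc_diffl) simp
    finally show ?thesis .
  qed
  have "tv x y u + tv x' y' w = (sc x u + sc x' w) + lam (sc y u + sc y' w)"
    unfolding tv_def using uU by (simp add: lam_add lam_sc subU subsc algebra_simps)
  also have "\<dots> = v" using 1 2 pq r by simp
  finally show "\<exists>a\<in>tv x y ` U. \<exists>b\<in>tv x' y' ` U. v = a + b" using uU by (metis image_eqI)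
next
  show "tv x y ` U \<inter> tv x' y' ` U = {0}"
  proof (intro set_eqI iffI)
    fix v assume "v \<in> tv x y ` U \<inter> tv x' y' ` U"
    then obtain u w where uw: "u \<in> U" "w \<in> U" "v = tv x y u" "v = tv x' y' w" by blast
    then have "sc x u + sc y (lam u) = sc x' w + sc y' (lam w)" by (simp add: tv_def)
    then have e: "sc x u = sc x' w" "sc y (lam u) = sc y' (lam w)"
      using uniq tv_split uw(1,2) by blast+
    then have "lam (sc y u) = lam (sc y' w)" using uw by (simp add: lam_sc)
    then have e2: "sc y u = sc y' w" using uw lam_inj subU subsc by blast
    have "sc (y'*x - x'*y) u = sc y' (sc x u) - sc x' (sc y u)" by (simp add: sc_diffl sc_sc)
    also have "\<dots> = sc (y' * x' - x' * y') w" by (simp add: e e2 sc_sc sc_diffl)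
    also have "\<dots> = 0" using c by (simp add: cen_comm)
    finally have "sc (y'*x - x'*y) u = 0" .
    moreover have "y'*x - x'*y \<noteq> 0" using d c by (simp add: cen_comm)
    ultimately have "u = 0" using sc_eq0 by blast
    then show "v \<in> {0}" using uw by simp
  next
    fix v :: 'v assume "v \<in> {0}"
    then show "v \<in> tv x y ` U \<inter> tv x' y' ` U" using U0 tv_0 by (metis IntI image_eqI singletonD)
  qed
qed

end

context setting begin

definition pU where "pU v = (SOME p. p \<in> U \<and> v - p \<in> U')"

lemma pU_ex: "\<exists>p. p \<in> U \<and> v - p \<in> U'"
proof -
  obtain p q where "p \<in> U" "q \<in> U'" "v = p + q" using decomp by blast
  then show ?thesis by (intro exI[of _ p]) simp
qed

lemma pU_prop: "pU v \<in> U \<and> v - pU v \<in> U'"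
  unfolding pU_def using pU_ex[of v] by (rule someI_ex)

lemma pU_eq: assumes "p \<in> U" "v - p \<in> U'" shows "pU v = p"
proof -
  have "pU v + (v - pU v) = p + (v - p)" by simp
  then show ?thesis using uniq pU_prop assms by blast
qed

lemma pU_add: "pU (v + w) = pU v + pU w"
proof (rule pU_eq)
  show "pU v + pU w \<in> U" using pU_prop subU subadd by blast
  have "v + w - (pU v + pU w) = (v - pU v) + (w - pU w)" by (simp add: algebra_simps)
  then show "v + w - (pU v + pU w) \<in> U'" using pU_prop subU' subadd by metis
qed

lemma pU_sc: "pU (sc a v) = sc a (pU v)"
proof (rule pU_eq)
  show "sc a (pU v) \<in> U" using pU_prop subU subsc by blast
  have "sc a v - sc a (pU v) = sc a (v - pU v)" by (simp add: sc_diff)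
  then show "sc a v - sc a (pU v) \<in> U'" using pU_prop subU' subsc by metis
qed

lemma pU_U: "u \<in> U \<Longrightarrow> pU u = u" by (rule pU_eq) (simp_all add: U'0)

lemma pU_U': "q \<in> U' \<Longrightarrow> pU (v + q) = pU v"
proof (rule pU_eq)
  assume q: "q \<in> U'"
  show "pU v \<in> U" using pU_prop by blast
  have "v + q - pU v = (v - pU v) + q" by (simp add: algebra_simps)
  then show "v + q - pU v \<in> U'" using pU_prop subU' subadd q by metis
qed

definition gsh where "gsh c v = v + sc c (lam (pU v))"

lemma gsh_inv: "gsh c (gsh (-c) v) = v"
proof -
  have q: "sc (-c) (lam (pU v)) \<in> U'" using pU_prop lam_in subU' subsc by blast
  have "pU (gsh (-c) v) = pU v" unfolding gsh_def using pU_U'[OF q] .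
  then show ?thesis unfolding gsh_def by (simp add: sc_negl)
qed

lemma gsh_lin: assumes c: "c \<in> centre" shows "linear_on sc UNIV (gsh c)"
  unfolding linear_on_def
proof (intro conjI ballI allI)
  fix v w
  have "lam (pU (v + w)) = lam (pU v) + lam (pU w)" using pU_add pU_prop lam_add by simp
  then show "gsh c (v + w) = gsh c v + gsh c w" unfolding gsh_def by (simp add: sc_add algebra_simps)
next
  fix a v
  have "lam (pU (sc a v)) = sc a (lam (pU v))" using pU_sc pU_prop lam_sc by simp
  then show "gsh c (sc a v) = sc a (gsh c v)" unfolding gsh_def using c by (simp add: sc_add sc_sc cen_comm)
qed

lemma gsh_img: "gsh c ` U = Tsub sc U lam 1 c"
  unfolding Tsub_eq
proof (rule image_cong[OF refl])
  fix u assume "u \<in> U"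
  then show "gsh c u = tv 1 c u" unfolding gsh_def tv_def by (simp add: pU_U)
qed

lemma lin0: "linear_on sc UNIV g \<Longrightarrow> g 0 = 0"
  unfolding linear_on_def by (metis UNIV_I sc_0l)

lemma conj_G:
  assumes lg: "linear_on sc UNIV g" and lh: "linear_on sc UNIV h"
    and gh: "\<And>v. g (h v) = v" and hg: "\<And>v. h (g v) = v" and X: "X \<in> Gset sc"
  shows "g ` X \<in> Gset sc"
proof -
  have sX: "lsubspace sc X" using X by (simp add: Gset_def iso_quot_def)
  obtain f0 where f0: "linear_on sc UNIV f0" "range f0 = X" "{v. f0 v = 0} = X"
    using X by (auto simp: Gset_def iso_quot_def)
  define f where "f = (\<lambda>v. g (f0 (h v)))"
  have g0: "g 0 = 0" using lin0[OF lg] .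
  have h0: "h 0 = 0" using lin0[OF lh] .
  have "lsubspace sc (g ` X)" unfolding lsubspace_def
  proof (intro conjI ballI allI)
    show "0 \<in> g ` X" using g0 sub0[OF sX] by (metis image_eqI)
  next
    fix a b assume "a \<in> g ` X" "b \<in> g ` X"
    then obtain x y where "x \<in> X" "y \<in> X" "a = g x" "b = g y" by blast
    moreover have "g (x + y) = g x + g y" using lg by (simp add: linear_on_def)
    ultimately show "a + b \<in> g ` X" using subadd[OF sX] by (metis image_eqI)
  next
    fix k a assume "a \<in> g ` X"
    then obtain x where "x \<in> X" "a = g x" by blast
    moreover have "g (sc k x) = sc k (g x)" using lg by (simp add: linear_on_def)
    ultimately show "sc k a \<in> g ` X" using subsc[OF sX] by (metis image_eqI)
  qed
  moreover have "linear_on sc UNIV f" using lg lh f0(1) unfolding linear_on_def f_def by simp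
  moreover have "range f = g ` X"
  proof (intro set_eqI iffI)
    fix v assume "v \<in> range f"
    then show "v \<in> g ` X" unfolding f_def using f0(2) by auto
  next
    fix v assume "v \<in> g ` X"
    then obtain x where x: "x \<in> X" "v = g x" by blast
    then obtain w where "x = f0 w" using f0(2) by auto
    then have "v = f (g w)" unfolding f_def using x hg by simp
    then show "v \<in> range f" by simp
  qed
  moreover have "{v. f v = 0} = g ` X"
  proof (intro set_eqI iffI)
    fix v assume "v \<in> {v. f v = 0}"
    then have "g (f0 (h v)) = 0" unfolding f_def by simp
    then have "h (g (f0 (h v))) = 0" using h0 by simp
    then have "f0 (h v) = 0" using hg by simp
    then have "h v \<in> X" using f0(3) by blast
    then show "v \<in> g ` X" using gh by (metis image_eqI)
  next
    fix v assume "v \<in> g ` X"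
    then obtain x where x: "x \<in> X" "v = g x" by blast
    then have "f0 x = 0" using f0(3) by blast
    then show "v \<in> {v. f v = 0}" unfolding f_def using x hg g0 by simp
  qed
  ultimately show ?thesis by (auto simp: Gset_def iso_quot_def)
qed

lemma Tsub_0y: assumes "y \<noteq> 0" shows "Tsub sc U lam 0 y = U'"
  unfolding Tsub_eq
proof (intro set_eqI iffI)
  fix v assume "v \<in> tv 0 y ` U"
  then obtain u where "u \<in> U" "v = tv 0 y u" by blast
  then show "v \<in> U'" unfolding tv_def using lam_in subU' subsc by simp
next
  fix v assume "v \<in> U'"
  then obtain r where r: "r \<in> U" "v = lam r" using lam_surj by blast
  then have "v = tv 0 y (sc (inverse y) r)" unfolding tv_def using assms by (simp add: lam_sc sc_sc)
  then show "v \<in> tv 0 y ` U" using r subU subsc by blast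
qed

lemma Tsub_10: "Tsub sc U lam 1 0 = U"
  unfolding Tsub_eq tv_def by simp

lemma Tsub_G:
  assumes c: "x \<in> centre" "y \<in> centre" and nz: "(x, y) \<noteq> (0, 0)"
  shows "Tsub sc U lam x y \<in> Gset sc"
proof (cases "x = 0")
  case True
  then show ?thesis using Tsub_0y U'G nz by simp
next
  case False
  define c where "c = inverse x * y"
  have cc: "c \<in> centre" unfolding c_def using c by (simp add: cen_simps)
  have "x * c - y * 1 = 0" unfolding c_def using False by (simp flip: mult.assoc)
  then have "Tsub sc U lam x y = Tsub sc U lam 1 c" using Tsub_det0[OF c cen_1 cc] nz by simp
  also have "\<dots> = gsh c ` U" by (simp add: gsh_img)
  also have "\<dots> \<in> Gset sc"
    using conj_G[OF gsh_lin[OF cc] gsh_lin[OF cen_minus[OF cc]] gsh_inv, of U] gsh_inv[of "-c"] UG by simp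
  finally show ?thesis .
qed

end


context vsp begin

definition indep where "indep a b \<longleftrightarrow> (\<forall>s t. sc s a + sc t b = 0 \<longrightarrow> s = 0 \<and> t = 0)"

lemma solve1: assumes "sc c v + w = 0" "c \<noteq> 0" shows "v = sc (inverse c) (- w)"
proof -
  have "sc c v = - w" using assms(1) by (simp add: eq_neg_iff_add_eq_0)
  then show ?thesis using sc_inv[OF assms(2), of v] by simp
qed

lemma notindep: assumes "\<not> indep a b" "a \<noteq> 0" shows "\<exists>k. b = sc k a"
proof -
  obtain s t where st: "sc s a + sc t b = 0" "\<not> (s = 0 \<and> t = 0)" using assms(1) unfolding indep_def by blast
  have "t \<noteq> 0"
  proof
    assume "t = 0"
    then have "sc s a = 0" using st by simp
    then show False using sc_eq0 assms(2) st(2) \<open>t = 0\<close> by blast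
  qed
  have "sc t b + sc s a = 0" using st by (simp add: add.commute)
  then have "b = sc (inverse t) (- sc s a)" using solve1 \<open>t \<noteq> 0\<close> by blast
  then have "b = sc (- (inverse t * s)) a" by (simp add: sc_neg sc_negl sc_sc)
  then show ?thesis by blast
qed

lemma three_dep_contra:
  assumes "dim_gt2 sc" and sp: "\<And>v. v \<in> span2 a b"
  shows False
proof -
  obtain S where S: "finite S" "card S = 3" "lindep_free sc S" using assms(1) unfolding dim_gt2_def by blast
  then obtain v1 v2 v3 where v: "S = {v1, v2, v3}" "v1 \<noteq> v2" "v2 \<noteq> v3" "v1 \<noteq> v3"
    using card_3_iff by metis
  obtain c1 c2 c3 where c: "c1 \<noteq> 0 \<or> c2 \<noteq> 0 \<or> c3 \<noteq> 0" "sc c1 v1 + sc c2 v2 + sc c3 v3 = 0"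
    using dep3[OF sp sp sp] by blast
  have gen: "\<And>x y z cx cy cz. sc cx x + sc cy y + sc cz z = 0 \<Longrightarrow> cx \<noteq> 0 \<Longrightarrow> x \<in> lspan sc {y, z}"
  proof -
    fix x y z cx cy cz
    assume h: "sc cx x + sc cy y + sc cz z = 0" "cx \<noteq> 0"
    have "sc cx x + (sc cy y + sc cz z) = 0" using h(1) by (simp add: add.assoc)
    then have x: "x = sc (inverse cx) (- (sc cy y + sc cz z))" using solve1 h(2) by blast
    have "y \<in> lspan sc {y, z}" "z \<in> lspan sc {y, z}" using lspan_sup by blast+
    then show "x \<in> lspan sc {y, z}" unfolding x
      by (intro subsc subneg subadd lspan_subspace)
  qed
  have fr: "\<forall>v\<in>S. v \<notin> lspan sc (S - {v})" using S(3) unfolding lindep_free_def .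
  have e1: "S - {v1} = {v2, v3}" "S - {v2} = {v1, v3}" "S - {v3} = {v1, v2}" using v by auto
  consider "c1 \<noteq> 0" | "c2 \<noteq> 0" | "c3 \<noteq> 0" using c(1) by blast
  then show False
  proof cases
    case 1
    then have "v1 \<in> lspan sc {v2, v3}" using gen c(2) by blast
    then show False using fr e1 v by auto
  next
    case 2
    have "sc c2 v2 + sc c1 v1 + sc c3 v3 = 0" using c(2) by (simp add: algebra_simps)
    then have "v2 \<in> lspan sc {v1, v3}" using gen 2 by blast
    then show False using fr e1 v by auto
  next
    case 3
    have "sc c3 v3 + sc c1 v1 + sc c2 v2 = 0" using c(2) by (simp add: algebra_simps)
    then have "v3 \<in> lspan sc {v1, v2}" using gen 3 by blast
    then show False using fr e1 v by auto
  qed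
qed

end

context setting begin

lemma U_nonzero: assumes "dim_gt2 sc" shows "\<exists>a\<in>U. a \<noteq> 0"
proof (rule ccontr)
  assume "\<not> (\<exists>a\<in>U. a \<noteq> 0)"
  then have U: "\<And>a. a \<in> U \<Longrightarrow> a = 0" by blast
  have "\<And>v. v \<in> span2 0 0"
  proof -
    fix v
    obtain p q where pq: "p \<in> U" "q \<in> U'" "v = p + q" using decomp by blast
    obtain r where "r \<in> U" "q = lam r" using lam_surj pq by blast
    then have "r = 0" "p = 0" using pq U by auto
    then have "v = 0" using pq \<open>q = lam r\<close> lam_0 by simp
    then show "v \<in> span2 0 0" unfolding span2_def by simp
  qed
  then show False using three_dep_contra[OF assms] by blast
qed

lemma U_indep: assumes "dim_gt2 sc" "a \<in> U" "a \<noteq> 0" shows "\<exists>b\<in>U. indep a b"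
proof (rule ccontr)
  assume "\<not> (\<exists>b\<in>U. indep a b)"
  then have k: "\<And>b. b \<in> U \<Longrightarrow> \<exists>k. b = sc k a" using notindep assms(3) by blast
  have "\<And>v. v \<in> span2 a (lam a)"
  proof -
    fix v
    obtain p q where pq: "p \<in> U" "q \<in> U'" "v = p + q" using decomp by blast
    obtain r where r: "r \<in> U" "q = lam r" using lam_surj pq by blast
    obtain k1 where k1: "p = sc k1 a" using k pq by blast
    obtain k2 where k2: "r = sc k2 a" using k r by blast
    have "v = sc k1 a + sc k2 (lam a)" using pq r k1 k2 lam_sc assms(2) by simp
    then show "v \<in> span2 a (lam a)" unfolding span2_def by blast
  qed
  then show False using three_dep_contra[OF assms(1)] by blast
qed

end

context setting begin

definition Reg where "Reg = {Tsub sc U lam x y | x y. x \<in> centre \<and> y \<in> centre \<and> (x, y) \<noteq> (0, 0)}"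

lemma Reg_G: "Reg \<subseteq> Gset sc"
  unfolding Reg_def using Tsub_G by blast

lemma Tsub_ne:
  assumes "dim_gt2 sc" and c: "x \<in> centre" "y \<in> centre" "x' \<in> centre" "y' \<in> centre"
    and d: "x*y' - y*x' \<noteq> 0" and nz: "(x, y) \<noteq> (0, 0)"
  shows "Tsub sc U lam x y \<noteq> Tsub sc U lam x' y'"
proof
  assume e: "Tsub sc U lam x y = Tsub sc U lam x' y'"
  obtain a where a: "a \<in> U" "a \<noteq> 0" using U_nonzero[OF assms(1)] by blast
  have "tv x y a \<in> Tsub sc U lam x y" using a Tsub_eq by blast
  moreover have "Tsub sc U lam x y \<inter> Tsub sc U lam x' y' = {0}"
    using Tsub_distant[OF c d] by (simp add: distant_def)
  ultimately have "tv x y a = 0" using e by auto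
  then show False using tv_nz a nz by blast
qed

lemma Reg_R1: assumes "dim_gt2 sc" shows "R1 sc Reg"
  unfolding R1_def
proof (intro conjI ballI impI)
  fix X Y assume "X \<in> Reg" "Y \<in> Reg" "X \<noteq> Y"
  then obtain x y x' y' where h: "x \<in> centre" "y \<in> centre" "(x, y) \<noteq> (0, 0)" "X = Tsub sc U lam x y"
    "x' \<in> centre" "y' \<in> centre" "(x', y') \<noteq> (0, 0)" "Y = Tsub sc U lam x' y'"
    unfolding Reg_def by blast
  then have "x*y' - y*x' \<noteq> 0" using Tsub_neq_det[of x y x' y'] \<open>X \<noteq> Y\<close> by blast
  then show "distant sc X Y" using Tsub_distant[of x y x' y'] h by blast
next
  have m: "Tsub sc U lam 1 0 \<in> Reg" "Tsub sc U lam 0 1 \<in> Reg" "Tsub sc U lam 1 1 \<in> Reg"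
    unfolding Reg_def by (intro CollectI exI[of _ 1] exI[of _ 0] conjI; simp)+
  have "Tsub sc U lam 1 0 \<noteq> Tsub sc U lam 0 1" "Tsub sc U lam 1 0 \<noteq> Tsub sc U lam 1 1"
    "Tsub sc U lam 0 1 \<noteq> Tsub sc U lam 1 1"
    by (rule Tsub_ne[OF assms]; simp)+
  then show "\<exists>A\<in>Reg. \<exists>B\<in>Reg. \<exists>C\<in>Reg. A \<noteq> B \<and> A \<noteq> C \<and> B \<noteq> C" using m by blast
qed

lemma in_int0: "distant sc X Y \<Longrightarrow> v \<in> X \<Longrightarrow> v \<in> Y \<Longrightarrow> v = 0"
  by (auto simp: distant_def)

lemma Reg_param: "X \<in> Reg \<Longrightarrow> \<exists>x y. x \<in> centre \<and> y \<in> centre \<and> (x, y) \<noteq> (0, 0) \<and> X = Tsub sc U lam x y"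
  unfolding Reg_def by blast

lemma Reg_meet_param:
  assumes "X \<in> Reg" "meets sc L X"
  shows "\<exists>x y u. x \<in> centre \<and> y \<in> centre \<and> (x, y) \<noteq> (0, 0) \<and> X = Tsub sc U lam x y \<and>
     u \<in> U \<and> u \<noteq> 0 \<and> tv x y u \<in> L \<and> tv x y u \<noteq> 0"
proof -
  obtain x y where xy: "x \<in> centre" "y \<in> centre" "(x, y) \<noteq> (0, 0)" "X = Tsub sc U lam x y"
    using Reg_param[OF assms(1)] by blast
  obtain p where p: "p \<noteq> 0" "p \<in> L" "p \<in> X" using meetsD[OF assms(2)] by blast
  then obtain u where "u \<in> U" "p = tv x y u" using xy(4) Tsub_eq by blast
  moreover have "u \<noteq> 0" using p calculation by auto
  ultimately show ?thesis using xy p by blast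
qed

end

context setting begin

lemma Reg_R2: assumes dg: "dim_gt2 sc" shows "R2 sc Reg"
  unfolding R2_def
proof (intro ballI impI)
  fix L X
  assume L: "L \<in> lines sc" and X: "X \<in> Reg"
  assume "\<exists>A\<in>Reg. \<exists>B\<in>Reg. \<exists>C\<in>Reg. A \<noteq> B \<and> A \<noteq> C \<and> B \<noteq> C \<and> meets sc L A \<and> meets sc L B \<and> meets sc L C"
  then obtain A B C where ABC: "A \<in> Reg" "B \<in> Reg" "C \<in> Reg" "A \<noteq> B" "A \<noteq> C" "B \<noteq> C"
    "meets sc L A" "meets sc L B" "meets sc L C" by blast
  obtain v w where Lvw: "L = span2 v w" using L unfolding lines_def by (auto simp: lspan2)
  have sL: "lsubspace sc L" unfolding Lvw by (rule span2_subspace)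
  obtain x1 y1 u1 where 1: "x1 \<in> centre" "y1 \<in> centre" "(x1, y1) \<noteq> (0, 0)" "A = Tsub sc U lam x1 y1"
     "u1 \<in> U" "u1 \<noteq> 0" "tv x1 y1 u1 \<in> L" "tv x1 y1 u1 \<noteq> 0" using Reg_meet_param[OF ABC(1,7)] by blast
  obtain x2 y2 u2 where 2: "x2 \<in> centre" "y2 \<in> centre" "(x2, y2) \<noteq> (0, 0)" "B = Tsub sc U lam x2 y2"
     "u2 \<in> U" "u2 \<noteq> 0" "tv x2 y2 u2 \<in> L" "tv x2 y2 u2 \<noteq> 0" using Reg_meet_param[OF ABC(2,8)] by blast
  obtain x3 y3 u3 where 3: "x3 \<in> centre" "y3 \<in> centre" "(x3, y3) \<noteq> (0, 0)" "C = Tsub sc U lam x3 y3"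
     "u3 \<in> U" "u3 \<noteq> 0" "tv x3 y3 u3 \<in> L" "tv x3 y3 u3 \<noteq> 0" using Reg_meet_param[OF ABC(3,9)] by blast
  define p1 where "p1 = tv x1 y1 u1"
  define p2 where "p2 = tv x2 y2 u2"
  define p3 where "p3 = tv x3 y3 u3"
  have pA: "p1 \<in> A" "p2 \<in> B" "p3 \<in> C" unfolding p1_def p2_def p3_def using 1 2 3 Tsub_eq by blast+
  have d12: "x1*y2 - y1*x2 \<noteq> 0" using Tsub_neq_det[of x1 y1 x2 y2] 1 2 ABC by blast
  have d13: "x1*y3 - y1*x3 \<noteq> 0" using Tsub_neq_det[of x1 y1 x3 y3] 1 3 ABC by blast
  have d23: "x2*y3 - y2*x3 \<noteq> 0" using Tsub_neq_det[of x2 y2 x3 y3] 2 3 ABC by blast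
  have dAB: "distant sc A B" using Tsub_distant[of x1 y1 x2 y2] 1 2 d12 by simp
  have dAC: "distant sc A C" using Tsub_distant[of x1 y1 x3 y3] 1 3 d13 by simp
  have dBC: "distant sc B C" using Tsub_distant[of x2 y2 x3 y3] 2 3 d23 by simp
  have sA: "lsubspace sc A" "lsubspace sc B" "lsubspace sc C" using Tsub_subspace 1 2 3 by auto
  obtain c1 c2 c3 where c: "c1 \<noteq> 0 \<or> c2 \<noteq> 0 \<or> c3 \<noteq> 0" "sc c1 p1 + sc c2 p2 + sc c3 p3 = 0"
    using dep3[of p1 v w p2 p3] 1 2 3 Lvw unfolding p1_def p2_def p3_def by blast
  have c3: "c3 \<noteq> 0"
  proof
    assume c30: "c3 = 0"
    then have e: "sc c1 p1 + sc c2 p2 = 0" using c(2) by simp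
    show False
    proof (cases "c1 = 0")
      case False
      then have "p1 = sc (inverse c1) (- sc c2 p2)" using solve1 e by blast
      then have "p1 \<in> B" using pA sA by (simp add: subsc subneg)
      then have "p1 = 0" using in_int0[OF dAB] pA by blast
      then show False using 1 p1_def by simp
    next
      case True
      then have "sc c2 p2 = 0" "c2 \<noteq> 0" using e c(1) c30 by auto
      then have "p2 = 0" using sc_eq0 by blast
      then show False using 2 p2_def by simp
    qed
  qed
  define s where "s = - (inverse c3 * c1)"
  define t where "t = - (inverse c3 * c2)"
  have "sc c3 p3 + (sc c1 p1 + sc c2 p2) = 0" using c(2) by (simp add: algebra_simps)
  then have "p3 = sc (inverse c3) (- (sc c1 p1 + sc c2 p2))" using solve1 c3 by blast
  then have p3e: "p3 = sc s p1 + sc t p2" unfolding s_def t_def by (simp add: sc_neg sc_add sc_sc sc_negl sc_diff)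
  have s0: "s \<noteq> 0"
  proof
    assume "s = 0"
    then have "p3 \<in> B" using p3e pA sA by (simp add: subsc)
    then have "p3 = 0" using in_int0[OF dBC] pA by blast
    then show False using 3 p3_def by simp
  qed
  have t0: "t \<noteq> 0"
  proof
    assume "t = 0"
    then have "p3 \<in> A" using p3e pA sA by (simp add: subsc)
    then have "p3 = 0" using in_int0[OF dAC] pA by blast
    then show False using 3 p3_def by simp
  qed
  define Av where "Av = sc (s*x1) u1 + sc (t*x2) u2"
  define Bv where "Bv = sc (s*y1) u1 + sc (t*y2) u2"
  have AvU: "Av \<in> U" "Bv \<in> U" unfolding Av_def Bv_def using 1 2 by (simp_all add: subU subsc subadd)
  have "sc s p1 + sc t p2 = Av + lam Bv"
    unfolding Av_def Bv_def p1_def p2_def tv_def using 1 2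
    by (simp add: lam_add lam_sc subU subsc sc_add sc_sc algebra_simps)
  then have "sc x3 u3 + sc y3 (lam u3) = Av + lam Bv" using p3e p3_def tv_def by simp
  then have "sc x3 u3 = Av \<and> sc y3 (lam u3) = lam Bv"
    using uniq tv_split[OF 3(5)] AvU lam_in by blast
  then have E1: "sc x3 u3 = Av" and "lam (sc y3 u3) = lam Bv" using 3 lam_sc by auto
  then have E2: "sc y3 u3 = Bv" using lam_inj 3(5) AvU subU subsc by blast
  define a1 where "a1 = s * (y3*x1 - x3*y1)"
  define a2 where "a2 = t * (y3*x2 - x3*y2)"
  have "sc y3 (sc x3 u3) - sc x3 (sc y3 u3) = sc (y3*x3 - x3*y3) u3" by (simp add: sc_sc sc_diffl)
  also have "\<dots> = 0" using 3 by (simp add: cen_comm)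
  finally have "sc y3 Av - sc x3 Bv = 0" using E1 E2 by simp
  moreover have "sc y3 Av - sc x3 Bv = sc (y3*(s*x1) - x3*(s*y1)) u1 + sc (y3*(t*x2) - x3*(t*y2)) u2"
    unfolding Av_def Bv_def by (simp add: sc_add sc_sc sc_diffl algebra_simps)
  moreover have "y3*(s*x1) - x3*(s*y1) = a1" "y3*(t*x2) - x3*(t*y2) = a2"
  proof -
    have "y3*(s*x1) = s*(y3*x1)" "x3*(s*y1) = s*(x3*y1)" "y3*(t*x2) = t*(y3*x2)" "x3*(t*y2) = t*(x3*y2)"
      by (simp_all add: mult.assoc[symmetric] cen_comm[OF 3(2), of s] cen_comm[OF 3(1), of s] cen_comm[OF 3(2), of t] cen_comm[OF 3(1), of t])
    then show "y3*(s*x1) - x3*(s*y1) = a1" "y3*(t*x2) - x3*(t*y2) = a2"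
      unfolding a1_def a2_def by (simp_all add: right_diff_distrib)
  qed
  ultimately have "sc a2 u2 + sc a1 u1 = 0" by (simp add: add.commute)
  moreover have a2: "a2 \<noteq> 0"
  proof -
    have "y3*x2 - x3*y2 = x2*y3 - y2*x3" using 2 3 by (simp add: cen_comm)
    then show ?thesis unfolding a2_def using t0 d23 by simp
  qed
  ultimately have u2e: "u2 = sc (inverse a2) (- sc a1 u1)" using solve1 by blast
  define k where "k = - (inverse a2 * a1)"
  have u2k: "u2 = sc k u1" unfolding k_def using u2e by (simp add: sc_neg sc_negl sc_sc)
  have k0: "k \<noteq> 0" using u2k 2 by auto
  define q2 where "q2 = tv x2 y2 u1"
  have "p2 = sc k q2" unfolding p2_def q2_def u2k using tv_sc 2 1 by simp
  then have "q2 = sc (inverse k) p2" using sc_inv k0 by simp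
  then have q2L: "q2 \<in> L" using sL 2 p2_def by (simp add: subsc)
  have p1L: "p1 \<in> L" using 1 p1_def by simp
  obtain x y where xy: "x \<in> centre" "y \<in> centre" "(x, y) \<noteq> (0, 0)" "X = Tsub sc U lam x y"
    using Reg_param[OF X] by blast
  define e where "e = inverse (x1*y2 - y1*x2)"
  have ce: "e \<in> centre" unfolding e_def using 1 2 by (simp add: cen_simps)
  have ed: "e * (x1*y2 - y1*x2) = 1" unfolding e_def using d12 by simp
  define al where "al = (x*y2 - y*x2)*e"
  define be where "be = (x1*y - y1*x)*e"
  have i1: "al*x1 + be*x2 = x * (e * (x1*y2 - y1*x2))"
    unfolding al_def be_def using 1 2 xy ce by (simp add: algebra_simps cen_comm cen_lcomm)
  have i2: "al*y1 + be*y2 = y * (e * (x1*y2 - y1*x2))"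
    unfolding al_def be_def using 1 2 xy ce by (simp add: algebra_simps cen_comm cen_lcomm)
  have "sc al p1 + sc be q2 = sc (al*x1 + be*x2) u1 + sc (al*y1 + be*y2) (lam u1)"
    unfolding p1_def q2_def tv_def by (simp add: sc_add sc_sc sc_addl algebra_simps)
  also have "\<dots> = tv x y u1" unfolding tv_def using i1 i2 ed by simp
  finally have qe: "sc al p1 + sc be q2 = tv x y u1" .
  have "tv x y u1 \<in> L" unfolding qe[symmetric] using sL p1L q2L by (simp add: subsc subadd)
  moreover have "tv x y u1 \<in> X" using xy 1 Tsub_eq by blast
  moreover have "tv x y u1 \<noteq> 0" using tv_nz 1 xy by blast
  ultimately show "meets sc L X" using meetsI sL Tsub_subspace xy by blast
qed

end

context setting begin

lemma Reg_mem: "x \<in> centre \<Longrightarrow> y \<in> centre \<Longrightarrow> (x, y) \<noteq> (0, 0) \<Longrightarrow> Tsub sc U lam x y \<in> Reg"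
  unfolding Reg_def by blast

lemma Reg_max:
  assumes dg: "dim_gt2 sc" and SS: "Reg \<subset> S" "S \<subseteq> Gset sc" "R1 sc S" "R2 sc S"
  shows False
proof -
  obtain X where X: "X \<in> S" "X \<notin> Reg" using SS(1) by blast
  have sX: "lsubspace sc X" using X SS(2) by (auto simp: Gset_def iso_quot_def)
  have mU: "U \<in> Reg" "U' \<in> Reg" "Tsub sc U lam 1 1 \<in> Reg"
  proof -
    have "Tsub sc U lam 1 0 \<in> Reg" "Tsub sc U lam 0 1 \<in> Reg" "Tsub sc U lam 1 1 \<in> Reg"
      by (simp_all add: Reg_mem)
    then show "U \<in> Reg" "U' \<in> Reg" "Tsub sc U lam 1 1 \<in> Reg" using Tsub_10 Tsub_0y[of 1] by simp_all
  qed
  have RS: "Reg \<subseteq> S" using SS(1) by (rule psubset_imp_subset)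
  have r1: "\<forall>X\<in>S. \<forall>Y\<in>S. X \<noteq> Y \<longrightarrow> distant sc X Y" using SS(3) unfolding R1_def by (rule conjunct1)
  have dist_S: "\<And>Y. Y \<in> Reg \<Longrightarrow> distant sc X Y"
  proof -
    fix Y assume Y: "Y \<in> Reg"
    then have "Y \<in> S" "X \<noteq> Y" using RS X by auto
    then show "distant sc X Y" using r1 X(1) by blast
  qed
  have dXU': "distant sc X U'" using dist_S[OF mU(2)] .
  have XU': "\<And>v. v \<in> X \<Longrightarrow> v \<in> U' \<Longrightarrow> v = 0" using in_int0[OF dXU'] by blast
  have ne: "U \<noteq> U'" "U \<noteq> Tsub sc U lam 1 1" "U' \<noteq> Tsub sc U lam 1 1"
    using Tsub_ne[OF dg, of 1 0 0 1] Tsub_ne[OF dg, of 1 0 1 1] Tsub_ne[OF dg, of 0 1 1 1]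
      Tsub_10 Tsub_0y[of 1] by auto
  have H: "\<And>a. a \<in> U \<Longrightarrow> a \<noteq> 0 \<Longrightarrow> \<exists>c. a + sc c (lam a) \<in> X"
  proof -
    fix a assume a: "a \<in> U" "a \<noteq> 0"
    have la: "lam a \<in> U'" "lam a \<noteq> 0" using a lam_in lam_eq0 by auto
    have aU': "a \<notin> U'" using a int0 by blast
    have laU: "lam a \<notin> U" using la int0 by blast
    have ne2: "a \<noteq> lam a" using aU' la by auto
    define L where "L = lspan sc {a, lam a}"
    have L2: "L = span2 a (lam a)" unfolding L_def by (rule lspan2)
    have "lspan sc {lam a} \<subseteq> U'" using la subU' by (intro lspan_sub) auto
    moreover have "lspan sc {a} \<subseteq> U" using a subU by (intro lspan_sub) auto
    ultimately have "lindep_free sc {a, lam a}"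
      unfolding lindep_free_def using aU' laU ne2 by (auto simp: insert_Diff_if)
    then have Ll: "L \<in> lines sc" unfolding lines_def L_def using ne2 by blast
    have sL: "lsubspace sc L" using L2 span2_subspace by simp
    have e3: "a = sc 1 a + sc 0 (lam a)" "lam a = sc 0 a + sc 1 (lam a)" "tv 1 1 a = sc 1 a + sc 1 (lam a)"
      unfolding tv_def by simp_all
    have inL: "a \<in> L" "lam a \<in> L" "tv 1 1 a \<in> L" unfolding L2 span2_def
      by (subst e3(1), blast) (subst e3(2), blast, subst e3(3), blast)
    have m1: "meets sc L U" using meetsI[OF a(2) sL subU inL(1) a(1)] .
    have m2: "meets sc L U'" using meetsI[OF la(2) sL subU' inL(2) la(1)] .
    have m3: "meets sc L (Tsub sc U lam 1 1)"
      using meetsI[OF tv_nz[OF a, of 1 1] sL Tsub_subspace[OF cen_1 cen_1] inL(3)] a Tsub_eq by auto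
    have r2: "\<forall>L\<in>lines sc. (\<exists>A\<in>S. \<exists>B\<in>S. \<exists>C\<in>S. A \<noteq> B \<and> A \<noteq> C \<and> B \<noteq> C \<and>
         meets sc L A \<and> meets sc L B \<and> meets sc L C) \<longrightarrow> (\<forall>X\<in>S. meets sc L X)"
      using SS(4) unfolding R2_def .
    have inS: "U \<in> S" "U' \<in> S" "Tsub sc U lam 1 1 \<in> S" using mU RS by auto
    have "\<exists>A\<in>S. \<exists>B\<in>S. \<exists>C\<in>S. A \<noteq> B \<and> A \<noteq> C \<and> B \<noteq> C \<and>
         meets sc L A \<and> meets sc L B \<and> meets sc L C"
      using inS ne m1 m2 m3 by blast
    then have "\<forall>X\<in>S. meets sc L X" using r2 Ll by blast
    then have "meets sc L X" using X(1) by blast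
    then obtain p where p: "p \<noteq> 0" "p \<in> L" "p \<in> X" using meetsD by blast
    then obtain s t where st: "p = sc s a + sc t (lam a)" using L2 unfolding span2_def by blast
    have s0: "s \<noteq> 0"
    proof
      assume "s = 0"
      then have "p \<in> U'" using st la subU' subsc by simp
      then show False using XU' p by blast
    qed
    have "sc (inverse s) p = a + sc (inverse s * t) (lam a)" using st s0 by (simp add: sc_add sc_sc)
    moreover have "sc (inverse s) p \<in> X" using sX p subsc by blast
    ultimately show "\<exists>c. a + sc c (lam a) \<in> X" by auto
  qed
  have Uq: "\<And>a c c'. a \<in> U \<Longrightarrow> a \<noteq> 0 \<Longrightarrow> a + sc c (lam a) \<in> X \<Longrightarrow> a + sc c' (lam a) \<in> X \<Longrightarrow> c = c'"
  proof -
    fix a c c' assume h: "a \<in> U" "a \<noteq> 0" "a + sc c (lam a) \<in> X" "a + sc c' (lam a) \<in> X"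
    have "(a + sc c (lam a)) - (a + sc c' (lam a)) = sc (c - c') (lam a)" by (simp add: sc_diffl)
    moreover have "(a + sc c (lam a)) - (a + sc c' (lam a)) \<in> X" using h sX subdiff by blast
    moreover have "sc (c - c') (lam a) \<in> U'" using h lam_in subU' subsc by blast
    ultimately have "sc (c - c') (lam a) = 0" using XU' by simp
    moreover have "lam a \<noteq> 0" using h lam_eq0 by blast
    ultimately show "c = c'" using sc_eq0 by fastforce
  qed
  have Iq: "\<And>a b c c'. a \<in> U \<Longrightarrow> b \<in> U \<Longrightarrow> indep a b \<Longrightarrow> a + sc c (lam a) \<in> X \<Longrightarrow> b + sc c' (lam b) \<in> X \<Longrightarrow> c = c'"
  proof -
    fix a b c c' assume h: "a \<in> U" "b \<in> U" "indep a b" "a + sc c (lam a) \<in> X" "b + sc c' (lam b) \<in> X"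
    have ab: "a + b \<in> U" using h subU subadd by blast
    have "a + b \<noteq> 0"
    proof
      assume "a + b = 0"
      then have "sc 1 a + sc 1 b = 0" by simp
      then have "(1::'k) = 0 \<and> (1::'k) = 0" using h(3) unfolding indep_def by blast
      then show False by simp
    qed
    then obtain c'' where c'': "(a + b) + sc c'' (lam (a + b)) \<in> X" using H ab by blast
    define w where "w = ((a + b) + sc c'' (lam (a + b))) - (a + sc c (lam a)) - (b + sc c' (lam b))"
    have "w \<in> X" unfolding w_def using h c'' sX subdiff by blast
    moreover have weq: "w = lam (sc (c'' - c) a + sc (c'' - c') b)"
    proof -
      have r: "lam (sc (c''-c) a + sc (c''-c') b) = sc (c''-c) (lam a) + sc (c''-c') (lam b)"
        using h subU subsc by (simp add: lam_add lam_sc)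
      have l: "lam (a+b) = lam a + lam b" using lam_add h by blast
      show ?thesis unfolding w_def r l by (simp add: sc_add sc_diffl algebra_simps)
    qed
    moreover have "w \<in> U'" unfolding weq using h subU subsc subadd lam_in by metis
    ultimately have "lam (sc (c'' - c) a + sc (c'' - c') b) = 0" using XU' by simp
    then have "sc (c'' - c) a + sc (c'' - c') b = 0" using lam_eq0 h subU subsc subadd by metis
    then have "c'' - c = 0 \<and> c'' - c' = 0" using h(3) unfolding indep_def by blast
    then have e1: "c'' - c = 0" and e2: "c'' - c' = 0" by auto
    have f1: "c'' = c" using e1 by (rule right_minus_eq[THEN iffD1])
    have f2: "c'' = c'" using e2 by (rule right_minus_eq[THEN iffD1])
    show "c = c'" using f1 f2 by (rule trans[OF sym])
  qed
  obtain a0 where a0: "a0 \<in> U" "a0 \<noteq> 0" using U_nonzero[OF dg] by blast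
  obtain c0 where c0: "a0 + sc c0 (lam a0) \<in> X" using H a0 by blast
  have all: "\<And>a. a \<in> U \<Longrightarrow> a + sc c0 (lam a) \<in> X"
  proof -
    fix a assume aU: "a \<in> U"
    show "a + sc c0 (lam a) \<in> X"
    proof (cases "a = 0")
      case True
      then show ?thesis using sub0[OF sX] lam_0 by simp
    next
      case False
      obtain ca where ca: "a + sc ca (lam a) \<in> X" using H aU False by blast
      obtain b where b: "b \<in> U" "indep a b" using U_indep[OF dg aU False] by blast
      have "b \<noteq> 0"
      proof
        assume "b = 0"
        then have "sc 0 a + sc 1 b = 0" by simp
        then have "(0::'k) = 0 \<and> (1::'k) = 0" using b(2) unfolding indep_def by blast
        then show False by simp
      qed
      then obtain cb where cb: "b + sc cb (lam b) \<in> X" using H b by blast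
      have cab: "ca = cb" using Iq[OF aU b(1) b(2) ca cb] .
      have "ca = c0"
      proof (cases "indep a a0")
        case True
        then show ?thesis using Iq[OF aU a0(1) True ca c0] by simp
      next
        case False
        then obtain k where k: "a0 = sc k a" using notindep \<open>a \<noteq> 0\<close> by blast
        have k0: "k \<noteq> 0" using k a0 by auto
        have "indep a0 b" unfolding indep_def
        proof (intro allI impI)
          fix s t assume "sc s a0 + sc t b = 0"
          then have "sc (s*k) a + sc t b = 0" using k by (simp add: sc_sc)
          then have "s*k = 0 \<and> t = 0" using b(2) unfolding indep_def by blast
          then show "s = 0 \<and> t = 0" using k0 by simp
        qed
        then have "c0 = cb" using Iq[OF a0(1) b(1) _ c0 cb] by simp
        then show ?thesis using cab by simp
      qed
      then show ?thesis using ca by simp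
    qed
  qed
  have cc: "c0 \<in> centre" unfolding centre_def
  proof (rule CollectI, rule allI)
    fix k
    show "c0 * k = k * c0"
    proof (cases "k = 0")
      case False
      have ka: "sc k a0 \<in> U" using a0 subU subsc by blast
      have "sc k a0 + sc c0 (lam (sc k a0)) \<in> X" using all[OF ka] .
      then have x1: "sc k a0 + sc (c0*k) (lam a0) \<in> X" using a0 by (simp add: lam_sc sc_sc)
      have x2: "sc k a0 + sc (k*c0) (lam a0) \<in> X" using subsc[OF sX c0, of k] by (simp add: sc_add sc_sc)
      have "(sc k a0 + sc (c0*k) (lam a0)) - (sc k a0 + sc (k*c0) (lam a0)) = sc (c0*k - k*c0) (lam a0)"
        by (simp add: sc_diffl)
      moreover have "sc (c0*k - k*c0) (lam a0) \<in> U'" using a0 lam_in subU' subsc by blast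
      ultimately have "sc (c0*k - k*c0) (lam a0) = 0" using XU' x1 x2 sX subdiff by metis
      moreover have "lam a0 \<noteq> 0" using a0 lam_eq0 by blast
      ultimately show ?thesis using sc_eq0 by fastforce
    qed simp
  qed
  have "X = Tsub sc U lam 1 c0"
    unfolding Tsub_eq
  proof (intro set_eqI iffI)
    fix v assume v: "v \<in> X"
    obtain p q where pq: "p \<in> U" "q \<in> U'" "v = p + q" using decomp by blast
    obtain r where r: "r \<in> U" "q = lam r" using lam_surj pq by blast
    have t: "tv 1 c0 p \<in> X" unfolding tv_def using all pq by simp
    have "v - tv 1 c0 p = lam r - sc c0 (lam p)" unfolding tv_def using pq r by simp
    moreover have "lam r - sc c0 (lam p) \<in> U'" using r pq lam_in subU' subsc subdiff by blast
    moreover have "v - tv 1 c0 p \<in> X" using v t sX subdiff by blast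
    ultimately have "v - tv 1 c0 p = 0" using XU' by metis
    then show "v \<in> tv 1 c0 ` U" using pq by auto
  next
    fix v assume "v \<in> tv 1 c0 ` U"
    then show "v \<in> X" unfolding tv_def using all by auto
  qed
  then have "X \<in> Reg" using cc Reg_mem[of 1 c0] by simp
  then show False using X by blast
qed

lemma Reg_regulus: assumes "dim_gt2 sc" shows "Z_regulus sc Reg"
  unfolding Z_regulus_def using Reg_G Reg_R1[OF assms] Reg_R2[OF assms] Reg_max[OF assms] by blast

end


lemma actK_Z10: "actK M (Zsub 1 0) = Zsub (fst (fst M)) (snd (fst M))"
proof (intro set_eqI iffI)
  fix p assume "p \<in> actK M (Zsub 1 0)"
  then obtain z where "z \<in> centre" "p = rowmulK (z * 1, z * 0) M" unfolding actK_def Zsub_def by blast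
  then show "p \<in> Zsub (fst (fst M)) (snd (fst M))" unfolding Zsub_def rowmulK_def by force
next
  fix p assume "p \<in> Zsub (fst (fst M)) (snd (fst M))"
  then obtain z where z: "z \<in> centre" "p = (z * fst (fst M), z * snd (fst M))" unfolding Zsub_def by blast
  then have "p = rowmulK (z * 1, z * 0) M" unfolding rowmulK_def by simp
  moreover have "(z * 1, z * 0) \<in> Zsub 1 0" unfolding Zsub_def using z by blast
  ultimately show "p \<in> actK M (Zsub 1 0)" unfolding actK_def by blast
qed

lemma projZ_iff:
  fixes x y :: "'k::division_ring"
  assumes c: "x \<in> centre" "y \<in> centre"
  shows "Zsub x y \<in> projZ \<longleftrightarrow> (x, y) \<noteq> (0, 0)"
proof
  assume "Zsub x y \<in> projZ"
  then obtain M :: "('k \<times> 'k) \<times> ('k \<times> 'k)" where M: "M \<in> GL2Z" "Zsub x y = actK M (Zsub 1 0)"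
    unfolding projZ_def by blast
  obtain N where N: "matmulK M N = ((1, 0), (0, 1))" using M(1) unfolding GL2Z_def by blast
  show "(x, y) \<noteq> (0, 0)"
  proof
    assume "(x, y) = (0, 0)"
    moreover have "\<exists>z::'k. z \<in> centre" using cen_0 by blast
    ultimately have z: "Zsub x y = {(0, 0)}" unfolding Zsub_def by auto
    have "(1 * fst (fst M), 1 * snd (fst M)) \<in> Zsub (fst (fst M)) (snd (fst M))"
      unfolding Zsub_def using cen_1 by blast
    then have "(fst (fst M), snd (fst M)) \<in> Zsub x y" using M(2) actK_Z10[of M] by simp
    then have "fst (fst M) = 0 \<and> snd (fst M) = 0" using z by simp
    then have "fst (fst M) = 0" "snd (fst M) = 0" by simp_all
    then have "rowmulK (fst M) N = (0, 0)" unfolding rowmulK_def by simp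
    moreover have "rowmulK (fst M) N = (1, 0)" using N unfolding matmulK_def by simp
    ultimately show False by simp
  qed
next
  assume nz: "(x, y) \<noteq> (0, 0)"
  show "Zsub x y \<in> projZ"
  proof (cases "x = 0")
    case False
    define M where "M = ((x, y), (0::'k, 1::'k))"
    define N where "N = ((inverse x, - (inverse x * y)), (0::'k, 1::'k))"
    have "M \<in> GL2Z" unfolding GL2Z_def
    proof (intro CollectI conjI exI[of _ N])
      show "mat_entries M \<subseteq> centre" "mat_entries N \<subseteq> centre"
        unfolding M_def N_def mat_entries_def using c by (auto simp: cen_simps)
      show "matmulK M N = ((1, 0), (0, 1))" "matmulK N M = ((1, 0), (0, 1))"
        unfolding M_def N_def matmulK_def rowmulK_def using False by (simp_all flip: mult.assoc)
    qed
    moreover have "actK M (Zsub 1 0) = Zsub x y" unfolding actK_Z10 M_def by simp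
    ultimately show ?thesis unfolding projZ_def by blast
  next
    case True
    then have y: "y \<noteq> 0" using nz by simp
    define M where "M = ((0::'k, y), (1::'k, 0::'k))"
    define N where "N = ((0::'k, 1::'k), (inverse y, 0::'k))"
    have "M \<in> GL2Z" unfolding GL2Z_def
    proof (intro CollectI conjI exI[of _ N])
      show "mat_entries M \<subseteq> centre" "mat_entries N \<subseteq> centre"
        unfolding M_def N_def mat_entries_def using c by (auto simp: cen_simps)
      show "matmulK M N = ((1, 0), (0, 1))" "matmulK N M = ((1, 0), (0, 1))"
        unfolding M_def N_def matmulK_def rowmulK_def using y by simp_all
    qed
    moreover have "actK M (Zsub 1 0) = Zsub x y" unfolding actK_Z10 M_def using True by simp
    ultimately show ?thesis unfolding projZ_def by blast
  qed
qed

context setting begin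

lemma End_range: "f \<in> End sc U \<Longrightarrow> f v \<in> U"
  unfolding End_def using U0 by (cases "v \<in> U") auto

lemma End_0: "f \<in> End sc U \<Longrightarrow> f 0 = 0"
proof -
  assume f: "f \<in> End sc U"
  have "f (sc 0 0) = sc 0 (f 0)" using f U0 unfolding End_def linear_on_def by blast
  then show ?thesis by simp
qed

lemma End_comp: assumes "f \<in> End sc U" "g \<in> End sc U" shows "g \<circ> f \<in> End sc U"
proof -
  have "g 0 = 0" using End_0 assms(2) .
  then show ?thesis using assms unfolding End_def linear_on_def by (auto simp: image_subset_iff)
qed

lemma rid_End: "rid U \<in> End sc U"
  unfolding End_def linear_on_def rid_def using subU by (auto simp: subadd subsc)

lemma rzero_End: "rzero \<in> End sc U"
  unfolding End_def linear_on_def rzero_def using U0 by auto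

lemma rscal_End: "x \<in> centre \<Longrightarrow> rscal sc U x \<in> End sc U"
  unfolding End_def linear_on_def rscal_def using subU U0
  by (auto simp: subadd subsc sc_add sc_sc cen_comm)

definition Ph where "Ph \<alpha> \<beta> = {\<alpha> u + lam (\<beta> u) | u. u \<in> U}"

lemma Rsub_self: "\<alpha> \<in> End sc U \<Longrightarrow> \<beta> \<in> End sc U \<Longrightarrow> (\<alpha>, \<beta>) \<in> Rsub sc U \<alpha> \<beta>"
proof -
  assume h: "\<alpha> \<in> End sc U" "\<beta> \<in> End sc U"
  have "rmul (rid U) \<alpha> = \<alpha>" "rmul (rid U) \<beta> = \<beta>"
    unfolding rmul_def rid_def using h End_0 by (auto simp: fun_eq_iff End_def)
  then show ?thesis unfolding Rsub_def using rid_End by (metis (mono_tags, lifting) mem_Collect_eq)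
qed

lemma Ph_sub:
  assumes "\<alpha> \<in> End sc U" "\<beta> \<in> End sc U" "(\<alpha>', \<beta>') \<in> Rsub sc U \<alpha> \<beta>"
  shows "Ph \<alpha>' \<beta>' \<subseteq> Ph \<alpha> \<beta>"
proof
  obtain \<rho> where r: "\<rho> \<in> End sc U" "\<alpha>' = rmul \<rho> \<alpha>" "\<beta>' = rmul \<rho> \<beta>" using assms(3) unfolding Rsub_def by blast
  fix v assume "v \<in> Ph \<alpha>' \<beta>'"
  then obtain u where u: "u \<in> U" "v = \<alpha>' u + lam (\<beta>' u)" unfolding Ph_def by blast
  then have "v = \<alpha> (\<rho> u) + lam (\<beta> (\<rho> u))" using r unfolding rmul_def by simp
  moreover have "\<rho> u \<in> U" using End_range r by blast
  ultimately show "v \<in> Ph \<alpha> \<beta>" unfolding Ph_def by blast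
qed

lemma Phi_Rsub:
  assumes "\<alpha> \<in> End sc U" "\<beta> \<in> End sc U"
  shows "Phi sc U lam (Rsub sc U \<alpha> \<beta>) = Ph \<alpha> \<beta>"
  unfolding Phi_def
proof (rule the_equality)
  show "\<exists>\<alpha>' \<beta>'. \<alpha>' \<in> End sc U \<and> \<beta>' \<in> End sc U \<and> Rsub sc U \<alpha> \<beta> = Rsub sc U \<alpha>' \<beta>' \<and>
      Ph \<alpha> \<beta> = {\<alpha>' u + lam (\<beta>' u) |u. u \<in> U}" using assms unfolding Ph_def by blast
next
  fix X assume "\<exists>\<alpha>' \<beta>'. \<alpha>' \<in> End sc U \<and> \<beta>' \<in> End sc U \<and> Rsub sc U \<alpha> \<beta> = Rsub sc U \<alpha>' \<beta>' \<and>
      X = {\<alpha>' u + lam (\<beta>' u) |u. u \<in> U}"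
  then obtain \<alpha>' \<beta>' where h: "\<alpha>' \<in> End sc U" "\<beta>' \<in> End sc U" "Rsub sc U \<alpha> \<beta> = Rsub sc U \<alpha>' \<beta>'"
      "X = Ph \<alpha>' \<beta>'" unfolding Ph_def by blast
  have "(\<alpha>', \<beta>') \<in> Rsub sc U \<alpha> \<beta>" using h Rsub_self by simp
  moreover have "(\<alpha>, \<beta>) \<in> Rsub sc U \<alpha>' \<beta>'" using h assms Rsub_self by metis
  ultimately show "X = Ph \<alpha> \<beta>" using h assms Ph_sub by (simp add: subset_antisym)
qed

lemma Ph_rscal: "x \<in> centre \<Longrightarrow> y \<in> centre \<Longrightarrow> Ph (rscal sc U x) (rscal sc U y) = Tsub sc U lam x y"
  unfolding Ph_def Tsub_def rscal_def by (auto simp: lam_sc)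

definition Imat where "Imat = ((rid U, rzero), (rzero, rid U))"

lemma Imat_mul: "matmulR Imat Imat = Imat"
  unfolding Imat_def matmulR_def rowmulR_def radd_def rmul_def rid_def rzero_def
  using U0 by (auto simp: fun_eq_iff)

lemma Imat_GL: "Imat \<in> GL2R sc U"
proof -
  have me: "mat_entries Imat \<subseteq> End sc U" unfolding mat_entries_def Imat_def using rid_End rzero_End by auto
  have mm: "matmulR Imat Imat = ((rid U, rzero), (rzero, rid U))" using Imat_mul unfolding Imat_def by simp
  show ?thesis unfolding GL2R_def using me mm by blast
qed

lemma row_Imat: "(\<And>v. f v \<in> U) \<Longrightarrow> (\<And>v. g v \<in> U) \<Longrightarrow> rowmulR (f, g) Imat = (f, g)"
  unfolding Imat_def rowmulR_def radd_def rmul_def rid_def rzero_def by (auto simp: fun_eq_iff)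

lemma actR_Imat: assumes "\<alpha> \<in> End sc U" "\<beta> \<in> End sc U"
  shows "actR Imat (Rsub sc U \<alpha> \<beta>) = Rsub sc U \<alpha> \<beta>"
proof -
  have "\<And>p. p \<in> Rsub sc U \<alpha> \<beta> \<Longrightarrow> rowmulR p Imat = p"
  proof -
    fix p assume "p \<in> Rsub sc U \<alpha> \<beta>"
    then obtain \<rho> where r: "p = (rmul \<rho> \<alpha>, rmul \<rho> \<beta>)" unfolding Rsub_def by blast
    have "\<And>v. rmul \<rho> \<alpha> v \<in> U" "\<And>v. rmul \<rho> \<beta> v \<in> U" unfolding rmul_def using End_range assms by auto
    then show "rowmulR p Imat = p" unfolding r by (rule row_Imat)
  qed
  then have "(\<lambda>p. rowmulR p Imat) ` Rsub sc U \<alpha> \<beta> = (\<lambda>p. p) ` Rsub sc U \<alpha> \<beta>" by (rule image_cong[OF refl])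
  then show ?thesis unfolding actR_def by simp
qed

lemma Phi_chain: assumes "x \<in> centre" "y \<in> centre"
  shows "Phi sc U lam (actR Imat (Rsub sc U (rscal sc U x) (rscal sc U y))) = Tsub sc U lam x y"
  using assms by (simp add: actR_Imat rscal_End Phi_Rsub Ph_rscal)

lemma part1:
  "\<exists>C\<in>Zchains sc U.
     {Tsub sc U lam x y | x y. x \<in> centre \<and> y \<in> centre \<and> (x, y) \<noteq> (0, 0)} = Phi sc U lam ` C"
proof (rule bexI)
  show "actR Imat ` embZ sc U \<in> Zchains sc U" unfolding Zchains_def using Imat_GL by blast
  show "{Tsub sc U lam x y | x y. x \<in> centre \<and> y \<in> centre \<and> (x, y) \<noteq> (0, 0)} = Phi sc U lam ` actR Imat ` embZ sc U"
  proof (intro set_eqI iffI)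
    fix X assume "X \<in> {Tsub sc U lam x y | x y. x \<in> centre \<and> y \<in> centre \<and> (x, y) \<noteq> (0, 0)}"
    then obtain x y where h: "x \<in> centre" "y \<in> centre" "(x, y) \<noteq> (0, 0)" "X = Tsub sc U lam x y" by blast
    then have "Rsub sc U (rscal sc U x) (rscal sc U y) \<in> embZ sc U" unfolding embZ_def using projZ_iff by blast
    moreover have "X = Phi sc U lam (actR Imat (Rsub sc U (rscal sc U x) (rscal sc U y)))" using h Phi_chain by simp
    ultimately show "X \<in> Phi sc U lam ` actR Imat ` embZ sc U" by blast
  next
    fix X assume "X \<in> Phi sc U lam ` actR Imat ` embZ sc U"
    then obtain x y where h: "x \<in> centre" "y \<in> centre" "Zsub x y \<in> projZ"
      "X = Phi sc U lam (actR Imat (Rsub sc U (rscal sc U x) (rscal sc U y)))" unfolding embZ_def by blast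
    then have "(x, y) \<noteq> (0, 0)" "X = Tsub sc U lam x y" using projZ_iff Phi_chain by auto
    then show "X \<in> {Tsub sc U lam x y | x y. x \<in> centre \<and> y \<in> centre \<and> (x, y) \<noteq> (0, 0)}" using h by blast
  qed
qed

end

theorem proposition4p4:
  fixes sc :: "'k::division_ring \<Rightarrow> 'v::ab_group_add \<Rightarrow> 'v"
    and U U' :: "'v set" and lam :: "'v \<Rightarrow> 'v"
  assumes "left_vs sc" and "dim_gt2 sc"
    and "U \<in> Gset sc" and "U' \<in> Gset sc" and "distant sc U U'"
    and "linear_on sc U lam" and "bij_betw lam U U'"
  shows "(\<exists>C\<in>Zchains sc U.
            {Tsub sc U lam x y | x y. x \<in> centre \<and> y \<in> centre \<and> (x, y) \<noteq> (0, 0)} = Phi sc U lam ` C)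
       \<and> Z_regulus sc {Tsub sc U lam x y | x y. x \<in> centre \<and> y \<in> centre \<and> (x, y) \<noteq> (0, 0)}"
proof -
  interpret setting sc U U' lam
    using assms by (unfold_locales) (auto simp: vsp_def)
  show ?thesis using part1 Reg_regulus[OF assms(2)] unfolding Reg_def by blast
qed


end
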